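(* Let $\mathbf X=\mathbf Y+\boldsymbol\theta\in\mathbb{R}^d$ where $\mathbf Y$ is the $\mu$-mixture of random vectors $\mathbf Y_s$, $s\in\mathcal S$, each having mean zero, covariance $\sigma^2\mathrm{Id}$ (with $\sigma^2$ not depending on $s$) and independent components $Y_{s,1},\dots,Y_{s,d}$, where each $Y_{s,i}$ has a (univariate) Stein kernel $T_{s,i}$ with $\sup_{s\in\mathcal S,\,1\le i\le d}E[T_{s,i}^2]<\infty$ uniformly in $d$. Suppose $\mathbf g_0\in W^{1,2}(\nu)$ for the law $\nu$ of $\mathbf X$, and that there is a constant $C$ (independent of $s$ and $d$) such that $E_{\boldsymbol\theta}\big[(d/\|\mathbf X_s\|^2)^2\big]\le C$ for all $s\in\mathcal S$, where $\mathbf X_s=\mathbf Y_s+\boldsymbol\theta$. If $\lambda=\sigma^2(d-2)$ and $\|\boldsymbol\theta\|^2=O(d)$, then the shrinkage estimator $S_\lambda$ has strictly smaller risk than $S_0(\mathbf X)=\mathbf X$ for all sufficiently large $d$.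
   Context: Mixtures: $(\mathcal S,\mathcal A)$ is a measurable space, $\{m_s\}_{s\in\mathcal S}$ probability measures on $\mathbb{R}^d$ with $s\mapsto m_s(A)$ measurable for each Borel $A$, $\mu$ a probability measure on $\mathcal S$; the $\mu$-mixture is the law $A\mapsto\int m_s(A)\,\mu(ds)$, and $\mathbf Y$ is the $\mu$-mixture of $\mathbf Y_s\sim m_s$. A univariate Stein kernel for a mean zero real random variable $Y$ is a random variable $T$ with $E[Yf(Y)]=E[Tf'(Y)]$ for all absolutely continuous $f$ for which the expectations exist. $\mathbf g_0(\mathbf x)=\mathbf x/\|\mathbf x\|^2$, $W^{1,2}(\nu)$ the weighted Sobolev space of $\mathbf f$ with $\int\|\mathbf f\|^2d\nu+\int\|\nabla\mathbf f\|^2d\nu<\infty$. $S_\lambda(\mathbf x)=\mathbf x(1-\lambda/\|\mathbf x\|^2)$, risk $E_{\boldsymbol\theta}\|S(\mathbf X)-\boldsymbol\theta\|^2$. Asymptotics refer to a sequence of such problems indexed by $d$. *)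

theory Defs
  imports "HOL-Probability.Probability" "HOL-Library.Landau_Symbols"
begin

text \<open>Vectors of R^d are represented as functions nat => real, only the
  coordinates i < d being relevant; the Borel structure on R^d is the finite
  product measure over the index set {..<d}.\<close>

definition vec_space :: "nat \<Rightarrow> (nat \<Rightarrow> real) measure" where
  "vec_space d = PiM {..<d} (\<lambda>_. borel)"

definition sqnorm :: "nat \<Rightarrow> (nat \<Rightarrow> real) \<Rightarrow> real" where
  "sqnorm d x = (\<Sum>i<d. (x i)\<^sup>2)"

definition translate :: "nat \<Rightarrow> (nat \<Rightarrow> real) \<Rightarrow> (nat \<Rightarrow> real) \<Rightarrow> (nat \<Rightarrow> real)" where
  "translate d \<theta> y = restrict (\<lambda>i. y i + \<theta> i) {..<d}"

definition abs_cont_interval :: "(real \<Rightarrow> real) \<Rightarrow> real \<Rightarrow> real \<Rightarrow> bool" where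
  "abs_cont_interval f a b \<longleftrightarrow>
     (\<forall>\<epsilon>>0. \<exists>\<delta>>0. \<forall>(n::nat) (l::nat \<Rightarrow> real) u.
        (\<forall>k<n. a \<le> l k \<and> l k \<le> u k \<and> u k \<le> b) \<and>
        (\<forall>k<n. \<forall>k'<n. k \<noteq> k' \<longrightarrow> u k \<le> l k' \<or> u k' \<le> l k) \<and>
        (\<Sum>k<n. u k - l k) < \<delta>
        \<longrightarrow> (\<Sum>k<n. \<bar>f (u k) - f (l k)\<bar>) < \<epsilon>)"

definition abs_cont :: "(real \<Rightarrow> real) \<Rightarrow> bool" where
  "abs_cont f \<longleftrightarrow> (\<forall>a b. abs_cont_interval f a b)"

definition stein_kernel :: "'w measure \<Rightarrow> ('w \<Rightarrow> real) \<Rightarrow> ('w \<Rightarrow> real) \<Rightarrow> bool" where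
  "stein_kernel P Y T \<longleftrightarrow> T \<in> borel_measurable P \<and>
     (\<forall>f. abs_cont f \<and> integrable P (\<lambda>w. Y w * f (Y w))
           \<and> integrable P (\<lambda>w. T w * deriv f (Y w))
        \<longrightarrow> (\<integral>w. Y w * f (Y w) \<partial>P) = (\<integral>w. T w * deriv f (Y w) \<partial>P))"

definition mixture :: "'s measure \<Rightarrow> ('s \<Rightarrow> 'a measure) \<Rightarrow> 'a measure \<Rightarrow> 'a measure" where
  "mixture \<mu> m M = measure_of (space M) (sets M) (\<lambda>A. \<integral>\<^sup>+ s. emeasure (m s) A \<partial>\<mu>)"

definition obs_law :: "nat \<Rightarrow> 's measure \<Rightarrow> ('s \<Rightarrow> 'w measure) \<Rightarrow> ('s \<Rightarrow> 'w \<Rightarrow> nat \<Rightarrow> real)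
     \<Rightarrow> (nat \<Rightarrow> real) \<Rightarrow> (nat \<Rightarrow> real) measure" where
  "obs_law d \<mu> P Y \<theta> =
     distr (mixture \<mu> (\<lambda>s. distr (P s) (vec_space d) (Y s)) (vec_space d)) (vec_space d) (translate d \<theta>)"

definition g0 :: "nat \<Rightarrow> (nat \<Rightarrow> real) \<Rightarrow> (nat \<Rightarrow> real)" where
  "g0 d x = restrict (\<lambda>i. x i / sqnorm d x) {..<d}"

definition pdiff :: "((nat \<Rightarrow> real) \<Rightarrow> (nat \<Rightarrow> real)) \<Rightarrow> nat \<Rightarrow> nat \<Rightarrow> (nat \<Rightarrow> real) \<Rightarrow> real" where
  "pdiff g i j x = deriv (\<lambda>t. g (x(j := x j + t)) i) 0"

definition in_W12 :: "nat \<Rightarrow> (nat \<Rightarrow> real) measure \<Rightarrow> ((nat \<Rightarrow> real) \<Rightarrow> (nat \<Rightarrow> real)) \<Rightarrow> bool" where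
  "in_W12 d \<nu> g \<longleftrightarrow>
     (\<integral>\<^sup>+ x. ennreal (sqnorm d (g x)) \<partial>\<nu>) < \<infinity> \<and>
     (\<integral>\<^sup>+ x. ennreal (\<Sum>i<d. \<Sum>j<d. (pdiff g i j x)\<^sup>2) \<partial>\<nu>) < \<infinity>"

definition shrink :: "nat \<Rightarrow> real \<Rightarrow> (nat \<Rightarrow> real) \<Rightarrow> (nat \<Rightarrow> real)" where
  "shrink d lam x = restrict (\<lambda>i. x i * (1 - lam / sqnorm d x)) {..<d}"

text \<open>Risk E_theta ||S(X) - theta||^2 where X has law nu (as an extended
  nonnegative integral, so infinite risk is not silently truncated).\<close>

definition risk :: "nat \<Rightarrow> (nat \<Rightarrow> real) measure \<Rightarrow> (nat \<Rightarrow> real) \<Rightarrow> ((nat \<Rightarrow> real) \<Rightarrow> (nat \<Rightarrow> real)) \<Rightarrow> ennreal" where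
  "risk d \<nu> \<theta> S = (\<integral>\<^sup>+ x. ennreal (sqnorm d (\<lambda>i. S x i - \<theta> i)) \<partial>\<nu>)"

end

theory Submission
  imports Defs
begin

lemma lipschitz_abs_cont:
  fixes f :: "real \<Rightarrow> real"
  assumes L: "\<And>x y. \<bar>f x - f y\<bar> \<le> L * \<bar>x - y\<bar>"
  shows "abs_cont f"
  unfolding abs_cont_def abs_cont_interval_def
proof (intro allI impI)
  fix a b \<epsilon> :: real assume e: "\<epsilon> > 0"
  have L0: "L \<ge> 0" using L[of 1 0] by simp
  show "\<exists>\<delta>>0. \<forall>(n::nat) l u.
        (\<forall>k<n. a \<le> l k \<and> l k \<le> u k \<and> u k \<le> b) \<and>
        (\<forall>k<n. \<forall>k'<n. k \<noteq> k' \<longrightarrow> u k \<le> l k' \<or> u k' \<le> l k) \<and>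
        (\<Sum>k<n. u k - l k) < \<delta>
        \<longrightarrow> (\<Sum>k<n. \<bar>f (u k) - f (l k)\<bar>) < \<epsilon>"
  proof (intro exI[of _ "\<epsilon> / (L + 1)"] conjI allI impI)
    show "\<epsilon> / (L + 1) > 0" using e L0 by simp
    fix n :: nat and l u :: "nat \<Rightarrow> real"
    assume H: "(\<forall>k<n. a \<le> l k \<and> l k \<le> u k \<and> u k \<le> b) \<and>
        (\<forall>k<n. \<forall>k'<n. k \<noteq> k' \<longrightarrow> u k \<le> l k' \<or> u k' \<le> l k) \<and>
        (\<Sum>k<n. u k - l k) < \<epsilon> / (L + 1)"
    have "(\<Sum>k<n. \<bar>f (u k) - f (l k)\<bar>) \<le> (\<Sum>k<n. L * (u k - l k))"
      using H by (intro sum_mono) (metis L abs_of_nonneg diff_ge_0_iff_ge lessThan_iff)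
    also have "\<dots> = L * (\<Sum>k<n. u k - l k)" by (simp add: sum_distrib_left)
    also have "\<dots> \<le> L * (\<epsilon> / (L + 1))" using H L0 by (intro mult_left_mono) auto
    also have "\<dots> < \<epsilon>" using L0 e by (simp add: field_simps)
    finally show "(\<Sum>k<n. \<bar>f (u k) - f (l k)\<bar>) < \<epsilon>" .
  qed
qed


definition phi :: "real \<Rightarrow> real \<Rightarrow> real \<Rightarrow> real" where
  "phi c R u = (u + c) / ((u + c)\<^sup>2 + R)"
definition dphi :: "real \<Rightarrow> real \<Rightarrow> real \<Rightarrow> real" where
  "dphi c R u = (R - (u + c)\<^sup>2) / ((u + c)\<^sup>2 + R)\<^sup>2"

lemma phi_deriv:
  assumes R: "R > 0"
  shows "(phi c R has_real_derivative dphi c R u) (at u)"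
proof -
  have ne: "(u + c)\<^sup>2 + R \<noteq> 0" using R by (metis add_nonneg_pos not_less_iff_gr_or_eq zero_le_power2)
  have d1: "((\<lambda>u. u + c) has_real_derivative 1) (at u)" by (auto intro!: derivative_eq_intros)
  have d2: "((\<lambda>u. (u + c)\<^sup>2 + R) has_real_derivative 2 * (u + c)) (at u)"
    by (auto intro!: derivative_eq_intros)
  have "((\<lambda>u. (u + c) / ((u + c)\<^sup>2 + R)) has_real_derivative
     (1 * ((u + c)\<^sup>2 + R) - (u + c) * (2 * (u + c))) / (((u + c)\<^sup>2 + R) * ((u + c)\<^sup>2 + R))) (at u)"
    by (rule DERIV_divide[OF d1 d2 ne])
  moreover have "(1 * ((u + c)\<^sup>2 + R) - (u + c) * (2 * (u + c))) / (((u + c)\<^sup>2 + R) * ((u + c)\<^sup>2 + R))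
      = (R - (u+c)\<^sup>2) / ((u + c)\<^sup>2 + R)\<^sup>2"
    by (simp add: power2_eq_square algebra_simps)
  ultimately show ?thesis unfolding phi_def dphi_def by simp
qed

lemma deriv_phi: "R > 0 \<Longrightarrow> deriv (phi c R) u = dphi c R u"
  using phi_deriv DERIV_imp_deriv by blast

lemma phi_bound: assumes R: "R > 0" shows "\<bar>phi c R u\<bar> \<le> 1 + 1 / R"
proof -
  define v where "v = u + c"
  have pos: "v\<^sup>2 + R > 0" using R by (simp add: add_nonneg_pos)
  have "\<bar>v\<bar> / (v\<^sup>2 + R) \<le> 1 + 1 / R"
  proof (cases "\<bar>v\<bar> \<ge> 1")
    case True
    have "\<bar>v\<bar> \<le> v\<^sup>2" using True by (simp add: power2_eq_square) (metis abs_ge_self abs_mult_self_eq abs_of_nonneg mult_le_cancel_left1 order_trans zero_le_one linorder_not_le)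
    hence "\<bar>v\<bar> \<le> 1 * (v\<^sup>2 + R)" using R by simp
    hence "\<bar>v\<bar> / (v\<^sup>2 + R) \<le> 1" using pos by (simp add: divide_le_eq)
    then show ?thesis using R by (smt (verit) divide_pos_pos)
  next
    case False
    have "\<bar>v\<bar> / (v\<^sup>2 + R) \<le> 1 / (v\<^sup>2 + R)" using False pos by (intro divide_right_mono) auto
    also have "\<dots> \<le> 1 / R" using R pos by (intro divide_left_mono) (auto intro: mult_pos_pos)
    finally show ?thesis by simp
  qed
  thus ?thesis unfolding phi_def v_def[symmetric] using pos by (simp add: abs_div)
qed

lemma dphi_bound: assumes R: "R > 0" shows "\<bar>dphi c R u\<bar> \<le> 1 / R"
proof -
  define v where "v = u + c"
  have pos: "v\<^sup>2 + R > 0" using R by (simp add: add_nonneg_pos)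
  have "\<bar>R - v\<^sup>2\<bar> \<le> v\<^sup>2 + R" using R by (simp add: abs_le_iff)
  hence "\<bar>R - v\<^sup>2\<bar> / (v\<^sup>2 + R)\<^sup>2 \<le> (v\<^sup>2 + R) / (v\<^sup>2 + R)\<^sup>2"
    using pos by (intro divide_right_mono) auto
  also have "\<dots> = 1 / (v\<^sup>2 + R)" using pos by (simp add: power2_eq_square)
  also have "\<dots> \<le> 1 / R" using R pos by (intro divide_left_mono) (auto intro: mult_pos_pos)
  finally show ?thesis unfolding dphi_def v_def[symmetric] by (simp add: abs_div)
qed

lemma phi_lipschitz: assumes R: "R > 0"
  shows "\<bar>phi c R x - phi c R y\<bar> \<le> (1 / R) * \<bar>x - y\<bar>"
proof -
  have "\<And>t. (phi c R has_real_derivative dphi c R t) (at t within {min x y .. max x y})"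
    using phi_deriv[OF R] has_field_derivative_at_within by blast
  hence "\<bar>phi c R x - phi c R y\<bar> \<le> (1/R) * \<bar>x - y\<bar>"
  proof -
    have "norm (phi c R x - phi c R y) \<le> (1/R) * norm (x - y)"
      apply (rule field_differentiable_bound[where S=UNIV and f'="dphi c R"])
      using phi_deriv[OF R] dphi_bound[OF R] by (auto simp: has_field_derivative_at_within)
    thus ?thesis by simp
  qed
  thus ?thesis .
qed

lemma phi_abs_cont: "R > 0 \<Longrightarrow> abs_cont (phi c R)"
  by (rule lipschitz_abs_cont[OF phi_lipschitz])


locale ghost = fixes M :: "'w measure" and I :: "nat set"
  assumes M_prob: "prob_space M" and finI: "finite I"
begin

abbreviation "\<Omega> \<equiv> PiM I (\<lambda>_. M)"

lemma prodps: "product_prob_space (\<lambda>_. M)"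
  by (simp add: M_prob product_prob_spaceI)

lemma Omega_prob: "prob_space \<Omega>"
  by (rule prob_space_PiM) (simp add: M_prob)

lemma split_integral:
  fixes F :: "(nat \<Rightarrow> 'w) \<Rightarrow> real"
  assumes i: "i \<in> I" and F: "integrable \<Omega> F"
  shows "integral\<^sup>L \<Omega> F = (\<integral>x. (\<integral>w. F (x(i:=w)) \<partial>M) \<partial>PiM (I - {i}) (\<lambda>_. M))"
proof -
  interpret product_sigma_finite "\<lambda>_. M"
    using prodps product_prob_space_def product_sigma_finite_def by blast
  have e: "insert i (I - {i}) = I" using i by auto
  show ?thesis
    using product_integral_insert[of "I - {i}" i F] F finI unfolding e by simp
qed

lemma update_space:
  assumes "x \<in> space (PiM (I - {i}) (\<lambda>_. M))" "w \<in> space M" "i \<in> I"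
  shows "x(i := w) \<in> space \<Omega>"
  using assms by (auto simp: space_PiM PiE_def extensional_def Pi_def split: if_splits)

lemma indep_mult:
  fixes g :: "'w \<Rightarrow> real" and h :: "(nat \<Rightarrow> 'w) \<Rightarrow> real"
  assumes i: "i \<in> I"
    and g: "g \<in> borel_measurable M" and h: "h \<in> borel_measurable \<Omega>"
    and hi: "\<And>x w. x \<in> space \<Omega> \<Longrightarrow> w \<in> space M \<Longrightarrow> h (x(i := w)) = h x"
    and int1: "integrable \<Omega> (\<lambda>x. g (x i) * h x)" and int2: "integrable \<Omega> h"
  shows "(\<integral>x. g (x i) * h x \<partial>\<Omega>) = (\<integral>w. g w \<partial>M) * (\<integral>x. h x \<partial>\<Omega>)"
proof -
  interpret M: prob_space M by (rule M_prob)
  let ?J = "PiM (I - {i}) (\<lambda>_. M)"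
  have const: "h (x(i:=w)) = h (x(i:=v))" if "x \<in> space ?J" "w \<in> space M" "v \<in> space M" for x w v
  proof -
    have "x(i:=v) \<in> space \<Omega>" using update_space that i by blast
    from hi[OF this that(2)] show ?thesis by simp
  qed
  have "(\<integral>x. g (x i) * h x \<partial>\<Omega>) = (\<integral>x. (\<integral>w. g w * h (x(i:=w)) \<partial>M) \<partial>?J)"
    using split_integral[OF i int1] by simp
  also have "\<dots> = (\<integral>x. (\<integral>w. g w \<partial>M) * (\<integral>w. h (x(i:=w)) \<partial>M) \<partial>?J)"
  proof (rule Bochner_Integration.integral_cong[OF refl])
    fix x assume x: "x \<in> space ?J"
    have "(\<integral>w. g w * h (x(i:=w)) \<partial>M) = (\<integral>w. g w * (\<integral>v. h (x(i:=v)) \<partial>M) \<partial>M)"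
    proof (rule Bochner_Integration.integral_cong[OF refl])
      fix w assume w: "w \<in> space M"
      have "(\<integral>v. h (x(i:=v)) \<partial>M) = (\<integral>v. h (x(i:=w)) \<partial>M)"
        by (rule Bochner_Integration.integral_cong[OF refl]) (rule const[OF x _ w])
      also have "\<dots> = h (x(i:=w))" by (simp add: M.prob_space)
      finally show "g w * h (x(i:=w)) = g w * (\<integral>v. h (x(i:=v)) \<partial>M)" by simp
    qed
    also have "\<dots> = (\<integral>w. g w \<partial>M) * (\<integral>v. h (x(i:=v)) \<partial>M)" by simp
    finally show "(\<integral>w. g w * h (x(i:=w)) \<partial>M) = (\<integral>w. g w \<partial>M) * (\<integral>w. h (x(i:=w)) \<partial>M)" .
  qed
  also have "\<dots> = (\<integral>w. g w \<partial>M) * (\<integral>x. (\<integral>w. h (x(i:=w)) \<partial>M) \<partial>?J)" by simp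
  also have "(\<integral>x. (\<integral>w. h (x(i:=w)) \<partial>M) \<partial>?J) = (\<integral>x. h x \<partial>\<Omega>)"
    using split_integral[OF i int2] by simp
  finally show ?thesis .
qed

lemma coord_indep: "I \<noteq> {} \<Longrightarrow> prob_space.indep_vars \<Omega> (\<lambda>_. M) (\<lambda>i x. x i) I"
proof -
  assume ne: "I \<noteq> {}"
  interpret O: prob_space \<Omega> by (rule Omega_prob)
  have "distr \<Omega> \<Omega> (\<lambda>x. \<lambda>i\<in>I. x i) = distr \<Omega> \<Omega> (\<lambda>x. x)"
    by (rule distr_cong) (auto simp: space_PiM PiE_def extensional_restrict)
  also have "\<dots> = \<Omega>" by simp
  also have "\<dots> = PiM I (\<lambda>i. distr \<Omega> M (\<lambda>x. x i))"
    by (rule PiM_cong) (use distr_PiM_component[of I "\<lambda>_. M", OF M_prob] in auto)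
  finally show ?thesis
    by (subst O.indep_vars_iff_distr_eq_PiM'[OF ne]) auto
qed

end


lemma stein_phi:
  assumes Mp: "prob_space M" and st: "stein_kernel M Yi Ti"
    and Ym: "Yi \<in> borel_measurable M" and Yint: "integrable M Yi" and Tint: "integrable M Ti"
    and R: "R > 0"
  shows "(\<integral>w. Yi w * phi c R (Yi w) \<partial>M) = (\<integral>w. Ti w * dphi c R (Yi w) \<partial>M)"
proof -
  have Tm: "Ti \<in> borel_measurable M" using st unfolding stein_kernel_def by blast
  have phim: "phi c R \<in> borel_measurable borel" unfolding phi_def by measurable
  have dphim: "dphi c R \<in> borel_measurable borel" unfolding dphi_def by measurable
  have i1: "integrable M (\<lambda>w. Yi w * phi c R (Yi w))"
  proof (rule Bochner_Integration.integrable_bound[of _ "\<lambda>w. (1 + 1/R) * Yi w"])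
    show "integrable M (\<lambda>w. (1 + 1/R) * Yi w)" using Yint by simp
    show "(\<lambda>w. Yi w * phi c R (Yi w)) \<in> borel_measurable M"
      using Ym phim by measurable
    show "AE w in M. norm (Yi w * phi c R (Yi w)) \<le> norm ((1 + 1/R) * Yi w)"
    proof (intro AE_I2)
      fix w
      have "\<bar>Yi w * phi c R (Yi w)\<bar> = \<bar>Yi w\<bar> * \<bar>phi c R (Yi w)\<bar>" by (simp add: abs_mult)
      also have "\<dots> \<le> \<bar>Yi w\<bar> * (1 + 1/R)" by (intro mult_left_mono phi_bound R) simp
      also have "\<dots> = \<bar>(1 + 1/R) * Yi w\<bar>" using R by (simp add: abs_mult)
      finally show "norm (Yi w * phi c R (Yi w)) \<le> norm ((1 + 1/R) * Yi w)" by simp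
    qed
  qed
  have i2: "integrable M (\<lambda>w. Ti w * deriv (phi c R) (Yi w))"
  proof (rule Bochner_Integration.integrable_bound[of _ "\<lambda>w. (1/R) * Ti w"])
    show "integrable M (\<lambda>w. (1/R) * Ti w)" using Tint by simp
    show "(\<lambda>w. Ti w * deriv (phi c R) (Yi w)) \<in> borel_measurable M"
      unfolding deriv_phi[OF R] using Ym Tm dphim by measurable
    show "AE w in M. norm (Ti w * deriv (phi c R) (Yi w)) \<le> norm ((1/R) * Ti w)"
    proof (intro AE_I2)
      fix w
      have "\<bar>Ti w * dphi c R (Yi w)\<bar> = \<bar>Ti w\<bar> * \<bar>dphi c R (Yi w)\<bar>" by (simp add: abs_mult)
      also have "\<dots> \<le> \<bar>Ti w\<bar> * (1/R)" by (intro mult_left_mono dphi_bound R) simp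
      also have "\<dots> = \<bar>(1/R) * Ti w\<bar>" using R by (simp add: abs_mult)
      finally show "norm (Ti w * deriv (phi c R) (Yi w)) \<le> norm ((1/R) * Ti w)"
        by (simp add: deriv_phi[OF R])
    qed
  qed
  have "(\<integral>w. Yi w * phi c R (Yi w) \<partial>M) = (\<integral>w. Ti w * deriv (phi c R) (Yi w) \<partial>M)"
    using st phi_abs_cont[OF R] i1 i2 unfolding stein_kernel_def by blast
  thus ?thesis by (simp add: deriv_phi[OF R])
qed

lemma stein_id:
  assumes st: "stein_kernel M Yi Ti"
    and Y2: "integrable M (\<lambda>w. Yi w * Yi w)" and Tint: "integrable M Ti"
  shows "(\<integral>w. Yi w * Yi w \<partial>M) = (\<integral>w. Ti w \<partial>M)"
proof -
  have ac: "abs_cont (\<lambda>x::real. x)" by (rule lipschitz_abs_cont[of _ 1]) simp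
  have d: "deriv (\<lambda>x::real. x) u = 1" for u by simp
  have "(\<integral>w. Yi w * Yi w \<partial>M) = (\<integral>w. Ti w * deriv (\<lambda>x. x) (Yi w) \<partial>M)"
  proof -
    have i2: "integrable M (\<lambda>w. Ti w * deriv (\<lambda>x. x) (Yi w))" using Tint by (simp add: d)
    from st have H: "\<forall>f. abs_cont f \<and> integrable M (\<lambda>w. Yi w * f (Yi w))
           \<and> integrable M (\<lambda>w. Ti w * deriv f (Yi w))
        \<longrightarrow> (\<integral>w. Yi w * f (Yi w) \<partial>M) = (\<integral>w. Ti w * deriv f (Yi w) \<partial>M)"
      unfolding stein_kernel_def by blast
    show ?thesis using H[rule_format, of "\<lambda>x. x"] ac Y2 i2 by blast
  qed
  thus ?thesis by (simp add: d)
qed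


locale setting = ghost M "{..<d}" for M :: "'w measure" and d :: nat +
  fixes Y :: "'w \<Rightarrow> nat \<Rightarrow> real" and T :: "nat \<Rightarrow> 'w \<Rightarrow> real" and \<theta> :: "nat \<Rightarrow> real"
    and \<sigma> B C :: real
  assumes Y_meas: "Y \<in> measurable M (vec_space d)"
    and mean_zero: "\<And>i. i < d \<Longrightarrow> integrable M (\<lambda>w. Y w i) \<and> (\<integral>w. Y w i \<partial>M) = 0"
    and covariance: "\<And>i j. i < d \<Longrightarrow> j < d \<Longrightarrow>
           integrable M (\<lambda>w. Y w i * Y w j) \<and> (\<integral>w. Y w i * Y w j \<partial>M) = (if i = j then \<sigma>\<^sup>2 else 0)"
    and indep: "prob_space.indep_vars M (\<lambda>_. borel) (\<lambda>i w. Y w i) {..<d}"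
    and stein: "\<And>i. i < d \<Longrightarrow> stein_kernel M (\<lambda>w. Y w i) (T i)"
    and stein_bound: "\<And>i. i < d \<Longrightarrow> (\<integral>\<^sup>+ w. ennreal ((T i w)\<^sup>2) \<partial>M) \<le> ennreal B"
    and inv_moment: "(\<integral>\<^sup>+ w. (ennreal (real d) / ennreal (sqnorm d (translate d \<theta> (Y w))))\<^sup>2 \<partial>M) \<le> ennreal C"
    and d_pos: "d > 0"
begin

interpretation M: prob_space M by (rule M_prob)
interpretation O: prob_space \<Omega> by (rule Omega_prob)

lemma Yc_meas[measurable]: "i < d \<Longrightarrow> (\<lambda>w. Y w i) \<in> borel_measurable M"
  using Y_meas unfolding vec_space_def by measurable

lemma T_meas[measurable]: "i < d \<Longrightarrow> T i \<in> borel_measurable M"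
  using stein unfolding stein_kernel_def by blast

definition "Bp = max B 0"
definition "Cp = max C 0"

lemma T2_int: "i < d \<Longrightarrow> integrable M (\<lambda>w. (T i w)\<^sup>2)"
proof -
  assume i: "i < d"
  have "(\<integral>\<^sup>+ w. ennreal ((T i w)\<^sup>2) \<partial>M) < \<infinity>"
    using stein_bound[OF i] by (simp add: order_le_less_trans)
  thus ?thesis using i by (intro integrableI_nonneg) auto
qed

lemma T2_le: "i < d \<Longrightarrow> (\<integral>w. (T i w)\<^sup>2 \<partial>M) \<le> Bp"
proof -
  assume i: "i < d"
  have "ennreal (\<integral>w. (T i w)\<^sup>2 \<partial>M) = (\<integral>\<^sup>+ w. ennreal ((T i w)\<^sup>2) \<partial>M)"
    using T2_int[OF i] by (intro nn_integral_eq_integral[symmetric]) auto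
  also have "\<dots> \<le> ennreal B" by (rule stein_bound[OF i])
  also have "\<dots> \<le> ennreal Bp" unfolding Bp_def by (simp add: ennreal_leI)
  finally have "ennreal (\<integral>w. (T i w)\<^sup>2 \<partial>M) \<le> ennreal Bp" .
  moreover have "0 \<le> Bp" unfolding Bp_def by simp
  ultimately show ?thesis using ennreal_le_iff by blast
qed

lemma T_int: "i < d \<Longrightarrow> integrable M (T i)"
  using M.square_integrable_imp_integrable[OF T_meas T2_int] by blast

lemma Y_int: "i < d \<Longrightarrow> integrable M (\<lambda>w. Y w i)" using mean_zero by blast

lemma Y2_int: "i < d \<Longrightarrow> integrable M (\<lambda>w. (Y w i)\<^sup>2)"
  using covariance[of i i] by (simp add: power2_eq_square)

lemma Y2_eq: "i < d \<Longrightarrow> (\<integral>w. (Y w i)\<^sup>2 \<partial>M) = \<sigma>\<^sup>2"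
  using covariance[of i i] by (simp add: power2_eq_square)

lemma T_mean: "i < d \<Longrightarrow> (\<integral>w. T i w \<partial>M) = \<sigma>\<^sup>2"
  using stein_id[OF stein covariance[THEN conjunct1] T_int] covariance[of i i] by simp

definition "yy i x = Y (x i) i"
definition "tt i x = T i (x i)"
definition "xx i x = Y (x i) i + \<theta> i"
definition "QQ x = (\<Sum>j<d. (xx j x)\<^sup>2)"
definition "RR i x = (\<Sum>j\<in>{..<d}-{i}. (xx j x)\<^sup>2)"
definition "yv x = (\<lambda>i\<in>{..<d}. Y (x i) i)"

lemma yy_meas[measurable]: "i < d \<Longrightarrow> yy i \<in> borel_measurable \<Omega>"
  unfolding yy_def by measurable
lemma tt_meas[measurable]: "i < d \<Longrightarrow> tt i \<in> borel_measurable \<Omega>"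
  unfolding tt_def by measurable
lemma xx_meas[measurable]: "i < d \<Longrightarrow> xx i \<in> borel_measurable \<Omega>"
  unfolding xx_def by measurable
lemma QQ_meas[measurable]: "QQ \<in> borel_measurable \<Omega>"
  unfolding QQ_def by measurable
lemma RR_meas[measurable]: "RR i \<in> borel_measurable \<Omega>"
  unfolding RR_def by measurable
lemma yv_meas[measurable]: "yv \<in> measurable \<Omega> (vec_space d)"
  unfolding yv_def vec_space_def by measurable

lemma law_M: "distr M (vec_space d) Y = PiM {..<d} (\<lambda>i. distr M borel (\<lambda>w. Y w i))"
proof -
  have "distr M (vec_space d) Y = distr M (vec_space d) (\<lambda>w. \<lambda>i\<in>{..<d}. Y w i)"
  proof (rule distr_cong[OF refl refl])
    fix w assume "w \<in> space M"
    hence "Y w \<in> space (vec_space d)" using measurable_space[OF Y_meas] by blast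
    thus "Y w = (\<lambda>i\<in>{..<d}. Y w i)"
      unfolding vec_space_def by (auto simp: space_PiM PiE_def extensional_restrict)
  qed
  also have "\<dots> = PiM {..<d} (\<lambda>i. distr M borel (\<lambda>w. Y w i))"
    unfolding vec_space_def
    using M.indep_vars_iff_distr_eq_PiM'[where I="{..<d}" and M'="\<lambda>_. borel" and X="\<lambda>i w. Y w i"] indep d_pos
    by auto
  finally show ?thesis .
qed

lemma law_Omega: "distr \<Omega> (vec_space d) yv = PiM {..<d} (\<lambda>i. distr M borel (\<lambda>w. Y w i))"
proof -
  have ind: "O.indep_vars (\<lambda>_. borel) (\<lambda>i x. Y (x i) i) {..<d}"
    by (rule O.indep_vars_compose2[OF coord_indep]) (use d_pos in auto)
  have "distr \<Omega> (vec_space d) yv = PiM {..<d} (\<lambda>i. distr \<Omega> borel (\<lambda>x. Y (x i) i))"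
    unfolding vec_space_def yv_def
    using O.indep_vars_iff_distr_eq_PiM'[where I="{..<d}" and M'="\<lambda>_. borel" and X="\<lambda>i x. Y (x i) i"] ind d_pos
    by auto
  also have "\<dots> = PiM {..<d} (\<lambda>i. distr M borel (\<lambda>w. Y w i))"
  proof (rule PiM_cong[OF refl])
    fix i assume i: "i \<in> {..<d}"
    have "distr \<Omega> borel (\<lambda>x. Y (x i) i) = distr (distr \<Omega> M (\<lambda>x. x i)) borel (\<lambda>w. Y w i)"
      using i by (subst distr_distr) (auto simp: comp_def)
    also have "distr \<Omega> M (\<lambda>x. x i) = M"
      using distr_PiM_component[of "{..<d}" "\<lambda>_. M", OF M_prob i] .
    finally show "distr \<Omega> borel (\<lambda>x. Y (x i) i) = distr M borel (\<lambda>w. Y w i)" .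
  qed
  finally show ?thesis .
qed

lemma transfer:
  assumes F: "F \<in> borel_measurable (vec_space d)"
  shows "(\<integral>\<^sup>+ w. F (Y w) \<partial>M) = (\<integral>\<^sup>+ x. F (yv x) \<partial>\<Omega>)"
proof -
  have "(\<integral>\<^sup>+ w. F (Y w) \<partial>M) = (\<integral>\<^sup>+ v. F v \<partial>distr M (vec_space d) Y)"
    using F Y_meas by (simp add: nn_integral_distr)
  also have "\<dots> = (\<integral>\<^sup>+ v. F v \<partial>distr \<Omega> (vec_space d) yv)" by (simp add: law_M law_Omega)
  also have "\<dots> = (\<integral>\<^sup>+ x. F (yv x) \<partial>\<Omega>)"
    using F by (simp add: nn_integral_distr)
  finally show ?thesis .
qed

lemma QQ_nonneg: "QQ x \<ge> 0" unfolding QQ_def by (simp add: sum_nonneg)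

lemma sqnorm_yv: "sqnorm d (translate d \<theta> (yv x)) = QQ x"
  unfolding sqnorm_def translate_def yv_def QQ_def xx_def by simp

lemma inv_moment_Omega:
  "(\<integral>\<^sup>+ x. (ennreal (real d) / ennreal (QQ x))\<^sup>2 \<partial>\<Omega>) \<le> ennreal C"
proof -
  have m: "(\<lambda>v. (ennreal (real d) / ennreal (sqnorm d (translate d \<theta> v)))\<^sup>2) \<in> borel_measurable (vec_space d)"
  proof -
    have "(\<lambda>v. (ennreal (real d) / ennreal (sqnorm d (translate d \<theta> v)))\<^sup>2)
      = (\<lambda>v. (ennreal (real d) / ennreal (\<Sum>i<d. (v i + \<theta> i)\<^sup>2))\<^sup>2)"
      by (simp add: sqnorm_def translate_def)
    thus ?thesis unfolding vec_space_def by simp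
  qed
  show ?thesis using transfer[OF m] inv_moment by (simp add: sqnorm_yv)
qed

lemma QQ_pos_AE: "AE x in \<Omega>. QQ x > 0"
proof -
  have "AE x in \<Omega>. (ennreal (real d) / ennreal (QQ x))\<^sup>2 \<noteq> \<infinity>"
    using inv_moment_Omega by (intro nn_integral_PInf_AE) (auto simp: top_unique)
  thus ?thesis
  proof (rule AE_mp, intro AE_I2 impI)
    fix x assume H: "(ennreal (real d) / ennreal (QQ x))\<^sup>2 \<noteq> \<infinity>"
    show "QQ x > 0"
    proof (rule ccontr)
      assume "\<not> QQ x > 0"
      hence "QQ x = 0" using QQ_nonneg[of x] by linarith
      hence "(ennreal (real d) / ennreal (QQ x))\<^sup>2 = \<infinity>" using d_pos
        by (simp add: divide_ennreal_def power2_eq_square ennreal_mult_top)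
      thus False using H by simp
    qed
  qed
qed

definition "iq x = 1 / QQ x"

lemma iq_meas[measurable]: "iq \<in> borel_measurable \<Omega>" unfolding iq_def by measurable
lemma iq_nonneg: "iq x \<ge> 0" unfolding iq_def using QQ_nonneg by simp

lemma iq2_int: "integrable \<Omega> (\<lambda>x. (iq x)\<^sup>2)" and iq2_le: "(\<integral>x. (iq x)\<^sup>2 \<partial>\<Omega>) \<le> Cp / (real d)\<^sup>2"
proof -
  have eq: "AE x in \<Omega>. (ennreal (real d) / ennreal (QQ x))\<^sup>2 = ennreal ((real d / QQ x)\<^sup>2)"
    using QQ_pos_AE by (rule AE_mp) (auto intro!: AE_I2 simp: divide_ennreal ennreal_power)
  have le: "(\<integral>\<^sup>+ x. ennreal ((real d / QQ x)\<^sup>2) \<partial>\<Omega>) \<le> ennreal C"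
    using inv_moment_Omega nn_integral_cong_AE[OF eq] by simp
  have int: "integrable \<Omega> (\<lambda>x. (real d / QQ x)\<^sup>2)"
    using le by (intro integrableI_nonneg) (auto simp: order_le_less_trans)
  have "ennreal (\<integral>x. (real d / QQ x)\<^sup>2 \<partial>\<Omega>) = (\<integral>\<^sup>+ x. ennreal ((real d / QQ x)\<^sup>2) \<partial>\<Omega>)"
    using int by (intro nn_integral_eq_integral[symmetric]) auto
  also have "\<dots> \<le> ennreal Cp" using le unfolding Cp_def by (simp add: order_trans ennreal_leI)
  finally have le2: "(\<integral>x. (real d / QQ x)\<^sup>2 \<partial>\<Omega>) \<le> Cp"
    using ennreal_le_iff[of Cp] unfolding Cp_def by auto
  have e2: "(\<lambda>x. (iq x)\<^sup>2) = (\<lambda>x. (1 / (real d)\<^sup>2) * (real d / QQ x)\<^sup>2)"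
    using d_pos by (auto simp: iq_def power_divide)
  show "integrable \<Omega> (\<lambda>x. (iq x)\<^sup>2)" unfolding e2 using int by simp
  have "(\<integral>x. (iq x)\<^sup>2 \<partial>\<Omega>) = (1 / (real d)\<^sup>2) * (\<integral>x. (real d / QQ x)\<^sup>2 \<partial>\<Omega>)"
    unfolding e2 by simp
  also have "\<dots> \<le> (1 / (real d)\<^sup>2) * Cp" using le2 by (intro mult_left_mono) auto
  finally show "(\<integral>x. (iq x)\<^sup>2 \<partial>\<Omega>) \<le> Cp / (real d)\<^sup>2" by simp
qed

lemma amgm: fixes a u v :: real assumes "a > 0" shows "\<bar>u * v\<bar> \<le> (a * u\<^sup>2 + v\<^sup>2 / a) / 2"
proof -
  have "0 \<le> (a * \<bar>u\<bar> - \<bar>v\<bar>)\<^sup>2" by simp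
  hence "2 * a * \<bar>u\<bar> * \<bar>v\<bar> \<le> a\<^sup>2 * u\<^sup>2 + v\<^sup>2"
    by (simp add: power2_eq_square algebra_simps)
  hence "(2 * a * \<bar>u\<bar> * \<bar>v\<bar>) / (2 * a) \<le> (a\<^sup>2 * u\<^sup>2 + v\<^sup>2) / (2 * a)"
    using assms by (intro divide_right_mono) auto
  moreover have "(2 * a * \<bar>u\<bar> * \<bar>v\<bar>) / (2 * a) = \<bar>u * v\<bar>" using assms by (simp add: abs_mult)
  moreover have "(a\<^sup>2 * u\<^sup>2 + v\<^sup>2) / (2 * a) = (a * u\<^sup>2 + v\<^sup>2 / a) / 2"
    using assms by (simp add: field_simps power2_eq_square)
  ultimately show ?thesis by simp
qed

lemma iq_int: "integrable \<Omega> iq" and iq_le: "(\<integral>x. iq x \<partial>\<Omega>) \<le> (1 + Cp) / (2 * real d)"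
proof -
  have pt: "iq x \<le> (1 / real d + real d * (iq x)\<^sup>2) / 2" for x
    using amgm[of "1 / real d" 1 "iq x"] d_pos iq_nonneg[of x] by (simp add: field_simps)
  show "integrable \<Omega> iq"
    apply (rule Bochner_Integration.integrable_bound[of _ "\<lambda>x. (1 / real d + real d * (iq x)\<^sup>2) / 2"])
    using iq2_int pt iq_nonneg by (auto intro!: AE_I2)
  have "(\<integral>x. iq x \<partial>\<Omega>) \<le> (\<integral>x. (1 / real d + real d * (iq x)\<^sup>2) / 2 \<partial>\<Omega>)"
    using iq2_int \<open>integrable \<Omega> iq\<close> pt by (intro integral_mono) auto
  also have "\<dots> = (1 / real d + real d * (\<integral>x. (iq x)\<^sup>2 \<partial>\<Omega>)) / 2"
    using iq2_int O.prob_space by simp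
  also have "\<dots> \<le> (1 / real d + real d * (Cp / (real d)\<^sup>2)) / 2"
    using iq2_le d_pos by (intro divide_right_mono add_left_mono mult_left_mono) auto
  also have "\<dots> = (1 + Cp) / (2 * real d)" using d_pos by (simp add: field_simps power2_eq_square)
  finally show "(\<integral>x. iq x \<partial>\<Omega>) \<le> (1 + Cp) / (2 * real d)" .
qed

end


context setting begin

interpretation M: prob_space M by (rule M_prob)
interpretation O: prob_space \<Omega> by (rule Omega_prob)

lemma coord_int:
  fixes g :: "'w \<Rightarrow> real"
  assumes i: "i < d" and g: "g \<in> borel_measurable M" "integrable M g"
  shows "integrable \<Omega> (\<lambda>x. g (x i))" and "(\<integral>x. g (x i) \<partial>\<Omega>) = (\<integral>w. g w \<partial>M)"
proof -
  have D: "distr \<Omega> M (\<lambda>x. x i) = M"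
    using distr_PiM_component[of "{..<d}" "\<lambda>_. M", OF M_prob] i by simp
  have m: "(\<lambda>x. x i) \<in> measurable \<Omega> M" by (rule measurable_component_singleton) (use i in simp)
  show "integrable \<Omega> (\<lambda>x. g (x i))"
    using integrable_distr_eq[OF m g(1)] g(2) D by simp
  show "(\<integral>x. g (x i) \<partial>\<Omega>) = (\<integral>w. g w \<partial>M)"
    using integral_distr[OF m g(1)] D by simp
qed

lemma yy_int: "i < d \<Longrightarrow> integrable \<Omega> (yy i)" and yy_mean: "i < d \<Longrightarrow> (\<integral>x. yy i x \<partial>\<Omega>) = 0"
  using coord_int[of i "\<lambda>w. Y w i"] Y_int mean_zero unfolding yy_def by auto
lemma yy2_int: "i < d \<Longrightarrow> integrable \<Omega> (\<lambda>x. (yy i x)\<^sup>2)" and yy2_eq: "i < d \<Longrightarrow> (\<integral>x. (yy i x)\<^sup>2 \<partial>\<Omega>) = \<sigma>\<^sup>2"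
  using coord_int[of i "\<lambda>w. (Y w i)\<^sup>2"] Y2_int Y2_eq unfolding yy_def by auto
lemma tt_int: "i < d \<Longrightarrow> integrable \<Omega> (tt i)" and tt_mean: "i < d \<Longrightarrow> (\<integral>x. tt i x \<partial>\<Omega>) = \<sigma>\<^sup>2"
  using coord_int[of i "T i"] T_int T_mean unfolding tt_def by auto
lemma tt2_int: "i < d \<Longrightarrow> integrable \<Omega> (\<lambda>x. (tt i x)\<^sup>2)" and tt2_le: "i < d \<Longrightarrow> (\<integral>x. (tt i x)\<^sup>2 \<partial>\<Omega>) \<le> Bp"
  using coord_int[of i "\<lambda>w. (T i w)\<^sup>2"] T2_int T2_le unfolding tt_def by auto

lemma xx_sq_le: "i < d \<Longrightarrow> (xx i x)\<^sup>2 \<le> QQ x"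
  unfolding QQ_def by (rule member_le_sum) auto

lemma xx_iq: "i < d \<Longrightarrow> (xx i x)\<^sup>2 * (iq x)\<^sup>2 \<le> iq x"
proof -
  assume i: "i < d"
  show ?thesis
  proof (cases "QQ x = 0")
    case True thus ?thesis by (simp add: iq_def)
  next
    case False
    hence pos: "QQ x > 0" using QQ_nonneg[of x] by linarith
    have "(xx i x)\<^sup>2 * (iq x)\<^sup>2 \<le> QQ x * (iq x)\<^sup>2"
      using xx_sq_le[OF i] by (intro mult_right_mono) auto
    also have "\<dots> = iq x" using pos by (simp add: iq_def power2_eq_square)
    finally show ?thesis .
  qed
qed

lemma upd_facts:
  assumes i: "i < d"
  shows "yy i (x(i:=w)) = Y w i" "tt i (x(i:=w)) = T i w" "xx i (x(i:=w)) = Y w i + \<theta> i"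
    "RR i (x(i:=w)) = RR i x" "QQ (x(i:=w)) = (Y w i + \<theta> i)\<^sup>2 + RR i x"
proof -
  show "yy i (x(i:=w)) = Y w i" "tt i (x(i:=w)) = T i w" "xx i (x(i:=w)) = Y w i + \<theta> i"
    by (simp_all add: yy_def tt_def xx_def)
  show R: "RR i (x(i:=w)) = RR i x" unfolding RR_def by (rule sum.cong) (auto simp: xx_def)
  have "QQ (x(i:=w)) = (xx i (x(i:=w)))\<^sup>2 + RR i (x(i:=w))"
    unfolding QQ_def RR_def using i by (subst sum.remove[of _ i]) auto
  thus "QQ (x(i:=w)) = (Y w i + \<theta> i)\<^sup>2 + RR i x" by (simp add: R xx_def)
qed

definition "pos i x = (if RR i x > 0 then 1 else (0::real))"
definition "Dd i x = iq x - 2 * (xx i x)\<^sup>2 * (iq x)\<^sup>2"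

lemma pos_meas[measurable]: "pos i \<in> borel_measurable \<Omega>" unfolding pos_def by measurable
lemma Dd_meas[measurable]: "i < d \<Longrightarrow> Dd i \<in> borel_measurable \<Omega>" unfolding Dd_def by measurable

lemma Dd_bound: "i < d \<Longrightarrow> \<bar>Dd i x\<bar> \<le> 3 * iq x"
proof -
  assume i: "i < d"
  have a1: "(xx i x)\<^sup>2 * (iq x)\<^sup>2 \<le> iq x" by (rule xx_iq[OF i])
  have a0: "0 \<le> (xx i x)\<^sup>2 * (iq x)\<^sup>2" by simp
  have e: "Dd i x = iq x - 2 * ((xx i x)\<^sup>2 * (iq x)\<^sup>2)" unfolding Dd_def by simp
  show ?thesis unfolding e abs_le_iff using a0 a1 iq_nonneg[of x] by linarith
qed

lemma yxq_bound: "i < d \<Longrightarrow> \<bar>yy i x * (xx i x * iq x)\<bar> \<le> ((yy i x)\<^sup>2 + iq x) / 2"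
proof -
  assume i: "i < d"
  have "\<bar>yy i x * (xx i x * iq x)\<bar> \<le> (1 * (yy i x)\<^sup>2 + (xx i x * iq x)\<^sup>2 / 1) / 2"
    by (rule amgm) simp
  also have "\<dots> \<le> ((yy i x)\<^sup>2 + iq x) / 2"
    using xx_iq[OF i, of x] by (simp add: power_mult_distrib)
  finally show ?thesis .
qed

lemma tD_bound: "i < d \<Longrightarrow> \<bar>tt i x * Dd i x\<bar> \<le> 3 * (((tt i x)\<^sup>2 + (iq x)\<^sup>2) / 2)"
proof -
  assume i: "i < d"
  have "\<bar>tt i x * Dd i x\<bar> \<le> \<bar>tt i x\<bar> * (3 * iq x)"
    using Dd_bound[OF i, of x] by (simp add: abs_mult mult_left_mono)
  also have "\<dots> = 3 * \<bar>tt i x * iq x\<bar>" using iq_nonneg[of x] by (simp add: abs_mult)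
  also have "\<dots> \<le> 3 * ((1 * (tt i x)\<^sup>2 + (iq x)\<^sup>2 / 1) / 2)"
    by (intro mult_left_mono amgm) auto
  finally show ?thesis by simp
qed

lemma pos_01: "pos i x = 0 \<or> pos i x = 1" unfolding pos_def by auto

lemma int_yxq: "i < d \<Longrightarrow> integrable \<Omega> (\<lambda>x. yy i x * (xx i x * iq x) * c i x)"
  if "\<And>x. \<bar>c i x\<bar> \<le> 1" "c i \<in> borel_measurable \<Omega>" for c
proof -
  assume i: "i < d"
  show ?thesis
  proof (rule Bochner_Integration.integrable_bound[of _ "\<lambda>x. ((yy i x)\<^sup>2 + iq x) / 2"])
    show "integrable \<Omega> (\<lambda>x. ((yy i x)\<^sup>2 + iq x) / 2)" using yy2_int[OF i] iq_int by simp
    show "(\<lambda>x. yy i x * (xx i x * iq x) * c i x) \<in> borel_measurable \<Omega>" using i that(2) by measurable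
    show "AE x in \<Omega>. norm (yy i x * (xx i x * iq x) * c i x) \<le> norm (((yy i x)\<^sup>2 + iq x) / 2)"
    proof (intro AE_I2)
      fix x
      have "\<bar>yy i x * (xx i x * iq x) * c i x\<bar> \<le> \<bar>yy i x * (xx i x * iq x)\<bar> * 1"
        unfolding abs_mult[of _ "c i x"] by (intro mult_left_mono that(1)) auto
      also have "\<dots> \<le> ((yy i x)\<^sup>2 + iq x) / 2" using yxq_bound[OF i] by simp
      finally show "norm (yy i x * (xx i x * iq x) * c i x) \<le> norm (((yy i x)\<^sup>2 + iq x) / 2)"
        using iq_nonneg[of x] by simp
    qed
  qed
qed

lemma int_tD: "i < d \<Longrightarrow> integrable \<Omega> (\<lambda>x. tt i x * Dd i x * c i x)"
  if "\<And>x. \<bar>c i x\<bar> \<le> 1" "c i \<in> borel_measurable \<Omega>" for c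
proof -
  assume i: "i < d"
  show ?thesis
  proof (rule Bochner_Integration.integrable_bound[of _ "\<lambda>x. 3 * (((tt i x)\<^sup>2 + (iq x)\<^sup>2) / 2)"])
    show "integrable \<Omega> (\<lambda>x. 3 * (((tt i x)\<^sup>2 + (iq x)\<^sup>2) / 2))" using tt2_int[OF i] iq2_int by simp
    show "(\<lambda>x. tt i x * Dd i x * c i x) \<in> borel_measurable \<Omega>" using i that(2) by measurable
    show "AE x in \<Omega>. norm (tt i x * Dd i x * c i x) \<le> norm (3 * (((tt i x)\<^sup>2 + (iq x)\<^sup>2) / 2))"
    proof (intro AE_I2)
      fix x
      have "\<bar>tt i x * Dd i x * c i x\<bar> \<le> \<bar>tt i x * Dd i x\<bar> * 1"
        unfolding abs_mult[of _ "c i x"] by (intro mult_left_mono that(1)) auto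
      also have "\<dots> \<le> 3 * (((tt i x)\<^sup>2 + (iq x)\<^sup>2) / 2)" using tD_bound[OF i] by simp
      finally show "norm (tt i x * Dd i x * c i x) \<le> norm (3 * (((tt i x)\<^sup>2 + (iq x)\<^sup>2) / 2))"
        by simp
    qed
  qed
qed

end


context setting begin

interpretation M: prob_space M by (rule M_prob)
interpretation O: prob_space \<Omega> by (rule Omega_prob)

lemma pos_abs: "\<bar>pos i x\<bar> \<le> 1" unfolding pos_def by auto

lemma stein_Omega:
  assumes i: "i < d"
  shows "(\<integral>x. yy i x * (xx i x * iq x) * pos i x \<partial>\<Omega>) = (\<integral>x. tt i x * Dd i x * pos i x \<partial>\<Omega>)"
proof -
  let ?J = "PiM ({..<d} - {i}) (\<lambda>_. M)"
  have iI: "i \<in> {..<d}" using i by simp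
  have L: "(\<integral>x. yy i x * (xx i x * iq x) * pos i x \<partial>\<Omega>) =
     (\<integral>x. (\<integral>w. yy i (x(i:=w)) * (xx i (x(i:=w)) * iq (x(i:=w))) * pos i (x(i:=w)) \<partial>M) \<partial>?J)"
    by (rule split_integral[OF iI int_yxq[OF pos_abs pos_meas i]])
  have R: "(\<integral>x. tt i x * Dd i x * pos i x \<partial>\<Omega>) =
     (\<integral>x. (\<integral>w. tt i (x(i:=w)) * Dd i (x(i:=w)) * pos i (x(i:=w)) \<partial>M) \<partial>?J)"
    by (rule split_integral[OF iI int_tD[OF pos_abs pos_meas i]])
  have inner: "(\<integral>w. yy i (x(i:=w)) * (xx i (x(i:=w)) * iq (x(i:=w))) * pos i (x(i:=w)) \<partial>M)
      = (\<integral>w. tt i (x(i:=w)) * Dd i (x(i:=w)) * pos i (x(i:=w)) \<partial>M)" for x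
  proof (cases "RR i x > 0")
    case False
    hence "pos i (x(i:=w)) = 0" for w unfolding pos_def upd_facts[OF i] by simp
    thus ?thesis by simp
  next
    case True
    define Rr where "Rr = RR i x"
    have Rp: "Rr > 0" using True Rr_def by simp
    have e1: "yy i (x(i:=w)) * (xx i (x(i:=w)) * iq (x(i:=w))) * pos i (x(i:=w))
        = Y w i * phi (\<theta> i) Rr (Y w i)" for w
      unfolding upd_facts[OF i] pos_def iq_def phi_def Rr_def[symmetric] using Rp by simp
    have e2: "tt i (x(i:=w)) * Dd i (x(i:=w)) * pos i (x(i:=w))
        = T i w * dphi (\<theta> i) Rr (Y w i)" for w
    proof -
      define v where "v = Y w i + \<theta> i"
      have nz: "v\<^sup>2 + Rr \<noteq> 0" using Rp by (metis add_nonneg_pos less_irrefl zero_le_power2)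
      have gen: "1 / q - 2 * a * (1 / q)\<^sup>2 = (q - 2 * a) / q\<^sup>2" if "q \<noteq> 0" for q a :: real
        using that by (simp add: field_simps power2_eq_square)
      have "1 / (v\<^sup>2 + Rr) - 2 * v\<^sup>2 * (1 / (v\<^sup>2 + Rr))\<^sup>2 = (Rr - v\<^sup>2) / (v\<^sup>2 + Rr)\<^sup>2"
        using gen[OF nz, of "v\<^sup>2"] by simp
      thus ?thesis
        unfolding upd_facts[OF i] pos_def Dd_def iq_def dphi_def Rr_def[symmetric] v_def[symmetric]
        using Rp by (simp add: xx_def upd_facts[OF i] v_def)
    qed
    show ?thesis unfolding e1 e2
      by (rule stein_phi[OF M_prob stein[OF i] Yc_meas[OF i] Y_int[OF i] T_int[OF i] Rp])
  qed
  show ?thesis unfolding L R inner ..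
qed

end


context setting begin

interpretation M: prob_space M by (rule M_prob)
interpretation O: prob_space \<Omega> by (rule Omega_prob)

definition "zz i x = 1 - pos i x"

lemma zz_meas[measurable]: "zz i \<in> borel_measurable \<Omega>" unfolding zz_def by measurable
lemma zz_01: "zz i x = 0 \<or> zz i x = 1" unfolding zz_def pos_def by auto
lemma zz_abs: "\<bar>zz i x\<bar> \<le> 1" using zz_01[of i x] by auto
lemma zz_nonneg: "zz i x \<ge> 0" using zz_01[of i x] by auto
lemma zz_upd: "i < d \<Longrightarrow> zz i (x(i:=w)) = zz i x" unfolding zz_def pos_def by (simp add: upd_facts)

lemma zz_mul_le: "0 \<le> a \<Longrightarrow> zz i x * a \<le> a" using zz_01[of i x] by auto
lemma zz_mul_le': "0 \<le> a \<Longrightarrow> a * zz i x \<le> a" using zz_01[of i x] by auto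

lemma RR_nonneg: "RR i x \<ge> 0" unfolding RR_def by (simp add: sum_nonneg)

lemma zz_QQ: assumes i: "i < d" and z: "zz i x = 1" shows "QQ x = (xx i x)\<^sup>2"
proof -
  have "RR i x = 0" using z RR_nonneg[of i x] unfolding zz_def pos_def by (auto split: if_splits)
  moreover have "QQ x = (xx i x)\<^sup>2 + RR i x"
    unfolding QQ_def RR_def using i by (subst sum.remove[of _ i]) auto
  ultimately show ?thesis by simp
qed

lemma sum_zz: assumes Q: "QQ x > 0" shows "(\<Sum>i<d. zz i x) \<le> 1"
proof -
  have "(\<Sum>i<d. zz i x) * QQ x = (\<Sum>i<d. zz i x * QQ x)" by (simp add: sum_distrib_right)
  also have "\<dots> = (\<Sum>i<d. zz i x * (xx i x)\<^sup>2)"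
  proof (rule sum.cong[OF refl])
    fix i assume "i \<in> {..<d}"
    thus "zz i x * QQ x = zz i x * (xx i x)\<^sup>2" using zz_01[of i x] zz_QQ[of i x] by auto
  qed
  also have "\<dots> \<le> (\<Sum>i<d. (xx i x)\<^sup>2)"
    by (rule sum_mono) (rule zz_mul_le, simp)
  also have "\<dots> = 1 * QQ x" unfolding QQ_def by simp
  finally show ?thesis using Q by (simp add: mult_le_cancel_right)
qed

lemma sum_zz_AE: "AE x in \<Omega>. (\<Sum>i<d. zz i x) \<le> 1"
  using QQ_pos_AE by (rule AE_mp) (auto intro!: AE_I2 sum_zz)

lemma zz_int: "integrable \<Omega> (zz i)"
  by (rule Bochner_Integration.integrable_bound[of _ "\<lambda>_. 1::real"]) (auto simp: zz_abs)

lemma sum_int_zz: "(\<Sum>i<d. \<integral>x. zz i x \<partial>\<Omega>) \<le> 1"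
proof -
  have "(\<Sum>i<d. \<integral>x. zz i x \<partial>\<Omega>) = (\<integral>x. (\<Sum>i<d. zz i x) \<partial>\<Omega>)"
    by (subst Bochner_Integration.integral_sum) (auto simp: zz_int)
  also have "\<dots> \<le> (\<integral>x. 1 \<partial>\<Omega>)"
    by (rule integral_mono_AE) (use sum_zz_AE zz_int in auto)
  finally show ?thesis by (simp add: O.prob_space)
qed

lemma indep_coord:
  fixes g :: "'w \<Rightarrow> real" and h :: "(nat \<Rightarrow> 'w) \<Rightarrow> real"
  assumes i: "i < d" and g: "g \<in> borel_measurable M" and h: "h \<in> borel_measurable \<Omega>"
    and hi: "\<And>x w. h (x(i := w)) = h x"
    and int1: "integrable \<Omega> (\<lambda>x. g (x i) * h x)" and int2: "integrable \<Omega> h"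
  shows "(\<integral>x. g (x i) * h x \<partial>\<Omega>) = (\<integral>w. g w \<partial>M) * (\<integral>x. h x \<partial>\<Omega>)"
  by (rule indep_mult[OF _ g h hi int1 int2]) (use i in auto)

lemma tt2_zz_int: "i < d \<Longrightarrow> integrable \<Omega> (\<lambda>x. (tt i x)\<^sup>2 * zz i x)"
  by (rule Bochner_Integration.integrable_bound[of _ "\<lambda>x. (tt i x)\<^sup>2"])
     (auto simp: tt2_int abs_mult abs_of_nonneg[OF zz_nonneg] intro!: AE_I2 zz_mul_le')

lemma abs_int_le:
  fixes f g :: "(nat \<Rightarrow> 'w) \<Rightarrow> real"
  assumes "integrable \<Omega> f" "integrable \<Omega> g" "\<And>x. \<bar>f x\<bar> \<le> g x"
  shows "\<bar>\<integral>x. f x \<partial>\<Omega>\<bar> \<le> (\<integral>x. g x \<partial>\<Omega>)"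
proof -
  have "\<bar>\<integral>x. f x \<partial>\<Omega>\<bar> \<le> (\<integral>x. \<bar>f x\<bar> \<partial>\<Omega>)" by (rule integral_abs_bound)
  also have "\<dots> \<le> (\<integral>x. g x \<partial>\<Omega>)" using assms by (intro integral_mono) auto
  finally show ?thesis .
qed

lemma yy2_zz_int: "i < d \<Longrightarrow> integrable \<Omega> (\<lambda>x. (yy i x)\<^sup>2 * zz i x)"
  by (rule Bochner_Integration.integrable_bound[of _ "\<lambda>x. (yy i x)\<^sup>2"])
     (auto simp: yy2_int abs_mult abs_of_nonneg[OF zz_nonneg] intro!: AE_I2 zz_mul_le')

lemma iq2_zz_int: "integrable \<Omega> (\<lambda>x. (iq x)\<^sup>2 * zz i x)"
  by (rule Bochner_Integration.integrable_bound[of _ "\<lambda>x. (iq x)\<^sup>2"])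
     (auto simp: iq2_int abs_mult abs_of_nonneg[OF zz_nonneg] intro!: AE_I2 zz_mul_le')

lemma iq_zz_int: "integrable \<Omega> (\<lambda>x. iq x * zz i x)"
  by (rule Bochner_Integration.integrable_bound[of _ "\<lambda>x. iq x"])
     (auto simp: iq_int abs_mult abs_of_nonneg[OF zz_nonneg] abs_of_nonneg[OF iq_nonneg] intro!: AE_I2 zz_mul_le' iq_nonneg)

lemma tt2_zz_eq: "i < d \<Longrightarrow> (\<integral>x. (tt i x)\<^sup>2 * zz i x \<partial>\<Omega>) = (\<integral>w. (T i w)\<^sup>2 \<partial>M) * (\<integral>x. zz i x \<partial>\<Omega>)"
  using indep_coord[of i "\<lambda>w. (T i w)\<^sup>2" "zz i"] tt2_zz_int zz_int zz_upd unfolding tt_def by auto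

lemma yy2_zz_eq: "i < d \<Longrightarrow> (\<integral>x. (yy i x)\<^sup>2 * zz i x \<partial>\<Omega>) = \<sigma>\<^sup>2 * (\<integral>x. zz i x \<partial>\<Omega>)"
  using indep_coord[of i "\<lambda>w. (Y w i)\<^sup>2" "zz i"] yy2_zz_int zz_int zz_upd Y2_eq unfolding yy_def by auto

lemma int_zz_nonneg: "(\<integral>x. zz i x \<partial>\<Omega>) \<ge> 0" by (simp add: zz_nonneg)

lemma sum_iq2_zz: "(\<Sum>i<d. \<integral>x. (iq x)\<^sup>2 * zz i x \<partial>\<Omega>) \<le> (\<integral>x. (iq x)\<^sup>2 \<partial>\<Omega>)"
proof -
  have "(\<Sum>i<d. \<integral>x. (iq x)\<^sup>2 * zz i x \<partial>\<Omega>) = (\<integral>x. (iq x)\<^sup>2 * (\<Sum>i<d. zz i x) \<partial>\<Omega>)"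
    by (subst Bochner_Integration.integral_sum[symmetric]) (auto simp: iq2_zz_int sum_distrib_left)
  also have "\<dots> \<le> (\<integral>x. (iq x)\<^sup>2 \<partial>\<Omega>)"
  proof (rule integral_mono_AE)
    show "integrable \<Omega> (\<lambda>x. (iq x)\<^sup>2 * (\<Sum>i<d. zz i x))"
      using iq2_zz_int by (simp add: sum_distrib_left)
    show "integrable \<Omega> (\<lambda>x. (iq x)\<^sup>2)" by (rule iq2_int)
    show "AE x in \<Omega>. (iq x)\<^sup>2 * (\<Sum>i<d. zz i x) \<le> (iq x)\<^sup>2"
      using sum_zz_AE by (rule AE_mp) (auto intro!: AE_I2 mult_left_le)
  qed
  finally show ?thesis .
qed

lemma sum_iq_zz: "(\<Sum>i<d. \<integral>x. iq x * zz i x \<partial>\<Omega>) \<le> (\<integral>x. iq x \<partial>\<Omega>)"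
proof -
  have "(\<Sum>i<d. \<integral>x. iq x * zz i x \<partial>\<Omega>) = (\<integral>x. iq x * (\<Sum>i<d. zz i x) \<partial>\<Omega>)"
    by (subst Bochner_Integration.integral_sum[symmetric]) (auto simp: iq_zz_int sum_distrib_left)
  also have "\<dots> \<le> (\<integral>x. iq x \<partial>\<Omega>)"
  proof (rule integral_mono_AE)
    show "integrable \<Omega> (\<lambda>x. iq x * (\<Sum>i<d. zz i x))"
      using iq_zz_int by (simp add: sum_distrib_left)
    show "integrable \<Omega> iq" by (rule iq_int)
    show "AE x in \<Omega>. iq x * (\<Sum>i<d. zz i x) \<le> iq x"
      using sum_zz_AE by (rule AE_mp) (auto intro!: AE_I2 mult_left_le iq_nonneg)
  qed
  finally show ?thesis .
qed

lemma sum_lin: "(\<Sum>i\<in>A. c * (a * U i + V i / (a::real))) = c * (a * sum U A + sum V A / a)"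
  by (induct A rule: infinite_finite_induct) (auto simp: algebra_simps add_divide_distrib)

lemma H1_bound: assumes a: "a > 0"
  shows "\<bar>\<Sum>i<d. \<integral>x. tt i x * Dd i x * zz i x \<partial>\<Omega>\<bar> \<le> 3 / 2 * (a * Bp + (\<integral>x. (iq x)\<^sup>2 \<partial>\<Omega>) / a)"
proof -
  define g where "g i x = 3 / 2 * (a * ((tt i x)\<^sup>2 * zz i x) + (iq x)\<^sup>2 * zz i x / a)" for i x
  have pt: "\<bar>tt i x * Dd i x * zz i x\<bar> \<le> g i x" if i: "i < d" for i x
  proof -
    have "\<bar>tt i x * Dd i x * zz i x\<bar> = \<bar>tt i x * Dd i x\<bar> * zz i x" by (simp add: abs_mult zz_nonneg)
    also have "\<dots> \<le> (\<bar>tt i x\<bar> * (3 * iq x)) * zz i x"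
      using Dd_bound[OF i, of x] by (intro mult_right_mono zz_nonneg) (simp add: abs_mult mult_left_mono)
    also have "\<dots> = 3 * \<bar>tt i x * iq x\<bar> * zz i x" using iq_nonneg[of x] by (simp add: abs_mult)
    also have "\<dots> \<le> 3 * ((a * (tt i x)\<^sup>2 + (iq x)\<^sup>2 / a) / 2) * zz i x"
      by (intro mult_right_mono mult_left_mono amgm a zz_nonneg) auto
    also have "\<dots> = g i x" unfolding g_def by (simp add: field_simps)
    finally show ?thesis .
  qed
  have gint: "integrable \<Omega> (g i)" if "i < d" for i
    unfolding g_def using tt2_zz_int[OF that] iq2_zz_int by simp
  have "\<bar>\<Sum>i<d. \<integral>x. tt i x * Dd i x * zz i x \<partial>\<Omega>\<bar> \<le> (\<Sum>i<d. \<bar>\<integral>x. tt i x * Dd i x * zz i x \<partial>\<Omega>\<bar>)"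
    by (rule sum_abs)
  also have "\<dots> \<le> (\<Sum>i<d. \<integral>x. g i x \<partial>\<Omega>)"
    by (rule sum_mono, rule abs_int_le) (auto intro: int_tD zz_abs gint pt)
  also have "\<dots> = (\<Sum>i<d. 3 / 2 * (a * (\<integral>x. (tt i x)\<^sup>2 * zz i x \<partial>\<Omega>) + (\<integral>x. (iq x)\<^sup>2 * zz i x \<partial>\<Omega>) / a))"
    by (rule sum.cong[OF refl]) (simp add: g_def tt2_zz_int iq2_zz_int)
  also have "\<dots> = 3 / 2 * (a * (\<Sum>i<d. \<integral>x. (tt i x)\<^sup>2 * zz i x \<partial>\<Omega>) + (\<Sum>i<d. \<integral>x. (iq x)\<^sup>2 * zz i x \<partial>\<Omega>) / a)"
    by (rule sum_lin)
  also have "\<dots> \<le> 3 / 2 * (a * (\<Sum>i<d. Bp * (\<integral>x. zz i x \<partial>\<Omega>)) + (\<integral>x. (iq x)\<^sup>2 \<partial>\<Omega>) / a)"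
  proof -
    have "(\<Sum>i<d. \<integral>x. (tt i x)\<^sup>2 * zz i x \<partial>\<Omega>) \<le> (\<Sum>i<d. Bp * (\<integral>x. zz i x \<partial>\<Omega>))"
    proof (rule sum_mono)
      fix i assume "i \<in> {..<d}" hence i: "i < d" by simp
      show "(\<integral>x. (tt i x)\<^sup>2 * zz i x \<partial>\<Omega>) \<le> Bp * (\<integral>x. zz i x \<partial>\<Omega>)"
        unfolding tt2_zz_eq[OF i] using T2_le[OF i] int_zz_nonneg by (intro mult_right_mono) auto
    qed
    thus ?thesis using sum_iq2_zz a
      by (intro mult_left_mono add_mono divide_right_mono) auto
  qed
  also have "\<dots> \<le> 3 / 2 * (a * Bp + (\<integral>x. (iq x)\<^sup>2 \<partial>\<Omega>) / a)"
  proof -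
    have "(\<Sum>i<d. Bp * (\<integral>x. zz i x \<partial>\<Omega>)) = Bp * (\<Sum>i<d. \<integral>x. zz i x \<partial>\<Omega>)" by (simp add: sum_distrib_left)
    also have "\<dots> \<le> Bp * 1" using sum_int_zz by (intro mult_left_mono) (auto simp: Bp_def)
    finally show ?thesis using a by (intro mult_left_mono add_right_mono) auto
  qed
  finally show ?thesis .
qed

lemma H2_bound: assumes a: "a > 0"
  shows "\<bar>\<Sum>i<d. \<integral>x. yy i x * (xx i x * iq x) * zz i x \<partial>\<Omega>\<bar> \<le> (a * \<sigma>\<^sup>2 + (\<integral>x. iq x \<partial>\<Omega>) / a) / 2"
proof -
  define g where "g i x = (a * ((yy i x)\<^sup>2 * zz i x) + iq x * zz i x / a) / 2" for i x
  have pt: "\<bar>yy i x * (xx i x * iq x) * zz i x\<bar> \<le> g i x" if i: "i < d" for i x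
  proof -
    have "\<bar>yy i x * (xx i x * iq x) * zz i x\<bar> = \<bar>yy i x * (xx i x * iq x)\<bar> * zz i x" by (simp add: abs_mult zz_nonneg)
    also have "\<dots> \<le> ((a * (yy i x)\<^sup>2 + (xx i x * iq x)\<^sup>2 / a) / 2) * zz i x"
      by (intro mult_right_mono amgm a zz_nonneg)
    also have "\<dots> \<le> ((a * (yy i x)\<^sup>2 + iq x / a) / 2) * zz i x"
      using xx_iq[OF i, of x] a
      by (intro mult_right_mono zz_nonneg divide_right_mono add_left_mono) (auto simp: power_mult_distrib)
    also have "\<dots> = g i x" unfolding g_def by (simp add: field_simps)
    finally show ?thesis .
  qed
  have gint: "integrable \<Omega> (g i)" if "i < d" for i
    unfolding g_def using yy2_zz_int[OF that] iq_zz_int by simp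
  have "\<bar>\<Sum>i<d. \<integral>x. yy i x * (xx i x * iq x) * zz i x \<partial>\<Omega>\<bar> \<le> (\<Sum>i<d. \<bar>\<integral>x. yy i x * (xx i x * iq x) * zz i x \<partial>\<Omega>\<bar>)"
    by (rule sum_abs)
  also have "\<dots> \<le> (\<Sum>i<d. \<integral>x. g i x \<partial>\<Omega>)"
    by (rule sum_mono, rule abs_int_le) (auto intro: int_yxq zz_abs gint pt)
  also have "\<dots> = (\<Sum>i<d. 1/2 * (a * (\<sigma>\<^sup>2 * (\<integral>x. zz i x \<partial>\<Omega>)) + (\<integral>x. iq x * zz i x \<partial>\<Omega>) / a))"
    by (rule sum.cong[OF refl]) (simp add: g_def yy2_zz_int iq_zz_int yy2_zz_eq)
  also have "\<dots> = 1/2 * (a * (\<Sum>i<d. \<sigma>\<^sup>2 * (\<integral>x. zz i x \<partial>\<Omega>)) + (\<Sum>i<d. \<integral>x. iq x * zz i x \<partial>\<Omega>) / a)"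
    by (rule sum_lin)
  also have "\<dots> \<le> (a * \<sigma>\<^sup>2 + (\<integral>x. iq x \<partial>\<Omega>) / a) / 2"
  proof -
    have "(\<Sum>i<d. \<sigma>\<^sup>2 * (\<integral>x. zz i x \<partial>\<Omega>)) = \<sigma>\<^sup>2 * (\<Sum>i<d. \<integral>x. zz i x \<partial>\<Omega>)" by (simp add: sum_distrib_left)
    also have "\<dots> \<le> \<sigma>\<^sup>2 * 1" using sum_int_zz by (intro mult_left_mono) auto
    finally have "(\<Sum>i<d. \<sigma>\<^sup>2 * (\<integral>x. zz i x \<partial>\<Omega>)) \<le> \<sigma>\<^sup>2 * 1" .
    hence "1/2 * (a * (\<Sum>i<d. \<sigma>\<^sup>2 * (\<integral>x. zz i x \<partial>\<Omega>)) + (\<Sum>i<d. \<integral>x. iq x * zz i x \<partial>\<Omega>) / a)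
       \<le> 1/2 * (a * \<sigma>\<^sup>2 + (\<integral>x. iq x \<partial>\<Omega>) / a)" using a sum_iq_zz
      by (intro divide_right_mono add_mono mult_left_mono) auto
    thus ?thesis by simp
  qed
  finally show ?thesis .
qed

end


lemma sum_sq_le_sq_sum:
  fixes f :: "nat \<Rightarrow> real"
  assumes "\<And>i. i \<in> A \<Longrightarrow> f i \<ge> 0"
  shows "(\<Sum>i\<in>A. (f i)\<^sup>2) \<le> (\<Sum>i\<in>A. f i)\<^sup>2"
  using assms
proof (induct A rule: infinite_finite_induct)
  case (insert a A)
  have S: "(\<Sum>i\<in>A. f i) \<ge> 0" using insert by (auto intro: sum_nonneg)
  have fa: "f a \<ge> 0" using insert by auto
  have "(\<Sum>i\<in>insert a A. (f i)\<^sup>2) = (f a)\<^sup>2 + (\<Sum>i\<in>A. (f i)\<^sup>2)" using insert by simp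
  also have "\<dots> \<le> (f a)\<^sup>2 + (\<Sum>i\<in>A. f i)\<^sup>2" using insert by auto
  also have "\<dots> \<le> (f a + (\<Sum>i\<in>A. f i))\<^sup>2"
    using S fa by (simp add: power2_eq_square algebra_simps)
  also have "\<dots> = (\<Sum>i\<in>insert a A. f i)\<^sup>2" using insert by simp
  finally show ?case .
qed auto

context setting begin

interpretation M: prob_space M by (rule M_prob)
interpretation O: prob_space \<Omega> by (rule Omega_prob)

lemma amgm1: "\<bar>u * v\<bar> \<le> (u\<^sup>2 + v\<^sup>2) / (2::real)"
  using amgm[of 1 u v] by simp
lemma amgm1': "\<bar>u * v\<bar> * 2 \<le> u\<^sup>2 + (v\<^sup>2::real)"
  using amgm1[of u v] by simp


definition "ut i x = tt i x - \<sigma>\<^sup>2"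

lemma ut_meas[measurable]: "i < d \<Longrightarrow> ut i \<in> borel_measurable \<Omega>" unfolding ut_def by measurable

lemma ut2_int: "i < d \<Longrightarrow> integrable \<Omega> (\<lambda>x. (ut i x)\<^sup>2)"
proof -
  assume i: "i < d"
  have e: "(\<lambda>x. (ut i x)\<^sup>2) = (\<lambda>x. (tt i x)\<^sup>2 - 2 * \<sigma>\<^sup>2 * tt i x + \<sigma>\<^sup>2 * \<sigma>\<^sup>2)"
    by (auto simp: ut_def power2_eq_square algebra_simps)
  show ?thesis unfolding e using tt2_int[OF i] tt_int[OF i] by simp
qed

lemma ut2_le: "i < d \<Longrightarrow> (\<integral>x. (ut i x)\<^sup>2 \<partial>\<Omega>) \<le> Bp"
proof -
  assume i: "i < d"
  have e: "(\<lambda>x. (ut i x)\<^sup>2) = (\<lambda>x. (tt i x)\<^sup>2 - 2 * \<sigma>\<^sup>2 * tt i x + \<sigma>\<^sup>2 * \<sigma>\<^sup>2)"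
    by (auto simp: ut_def power2_eq_square algebra_simps)
  have "(\<integral>x. (ut i x)\<^sup>2 \<partial>\<Omega>) = (\<integral>x. (tt i x)\<^sup>2 \<partial>\<Omega>) - 2 * \<sigma>\<^sup>2 * \<sigma>\<^sup>2 + \<sigma>\<^sup>2 * \<sigma>\<^sup>2"
    unfolding e using tt2_int[OF i] tt_int[OF i] tt_mean[OF i] by (simp add: O.prob_space)
  also have "\<dots> \<le> Bp"
  proof -
    have "0 \<le> \<sigma>\<^sup>2 * \<sigma>\<^sup>2" by simp
    thus ?thesis using tt2_le[OF i] by linarith
  qed
  finally show ?thesis .
qed

lemma ut_prod_int: "i < d \<Longrightarrow> j < d \<Longrightarrow> integrable \<Omega> (\<lambda>x. ut i x * ut j x)"
  by (rule Bochner_Integration.integrable_bound[of _ "\<lambda>x. ((ut i x)\<^sup>2 + (ut j x)\<^sup>2) / 2"])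
     (auto simp: ut2_int intro!: AE_I2 amgm1 amgm1')

lemma ut_cross: assumes i: "i < d" and j: "j < d" and ij: "i \<noteq> j"
  shows "(\<integral>x. ut i x * ut j x \<partial>\<Omega>) = 0"
proof -
  have "(\<integral>x. (T i (x i) - \<sigma>\<^sup>2) * ut j x \<partial>\<Omega>) = (\<integral>w. T i w - \<sigma>\<^sup>2 \<partial>M) * (\<integral>x. ut j x \<partial>\<Omega>)"
  proof (rule indep_coord[OF i])
    show "(\<lambda>w. T i w - \<sigma>\<^sup>2) \<in> borel_measurable M" using i by measurable
    show "ut j \<in> borel_measurable \<Omega>" using j by measurable
    show "ut j (x(i := w)) = ut j x" for x w using ij by (simp add: ut_def tt_def)
    show "integrable \<Omega> (\<lambda>x. (T i (x i) - \<sigma>\<^sup>2) * ut j x)"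
      using ut_prod_int[OF i j] by (simp add: ut_def tt_def)
    have "ut j = (\<lambda>x. tt j x - \<sigma>\<^sup>2)" by (simp add: ut_def fun_eq_iff)
    thus "integrable \<Omega> (ut j)" using tt_int[OF j] by simp
  qed
  moreover have "(\<integral>w. T i w - \<sigma>\<^sup>2 \<partial>M) = 0"
    using T_int[OF i] T_mean[OF i] by (simp add: M.prob_space)
  ultimately show ?thesis by (simp add: ut_def tt_def)
qed

definition "US x = (\<Sum>i<d. ut i x)"

lemma US_meas[measurable]: "US \<in> borel_measurable \<Omega>"
  unfolding US_def by (rule borel_measurable_sum) simp

lemma US2_eq: "(US x)\<^sup>2 = (\<Sum>i<d. \<Sum>j<d. ut i x * ut j x)"
  unfolding US_def power2_eq_square by (simp add: sum_product)

lemma US2_int: "integrable \<Omega> (\<lambda>x. (US x)\<^sup>2)"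
  unfolding US2_eq by (auto intro!: Bochner_Integration.integrable_sum ut_prod_int)

lemma US2_le: "(\<integral>x. (US x)\<^sup>2 \<partial>\<Omega>) \<le> real d * Bp"
proof -
  have "(\<integral>x. (US x)\<^sup>2 \<partial>\<Omega>) = (\<Sum>i<d. \<Sum>j<d. \<integral>x. ut i x * ut j x \<partial>\<Omega>)"
  proof -
    have a: "\<And>i. i \<in> {..<d} \<Longrightarrow> integrable \<Omega> (\<lambda>x. \<Sum>j<d. ut i x * ut j x)"
      by (auto intro!: Bochner_Integration.integrable_sum ut_prod_int)
    have b: "\<And>i. i \<in> {..<d} \<Longrightarrow> (\<integral>x. (\<Sum>j<d. ut i x * ut j x) \<partial>\<Omega>) = (\<Sum>j<d. \<integral>x. ut i x * ut j x \<partial>\<Omega>)"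
      by (rule Bochner_Integration.integral_sum) (auto intro!: ut_prod_int)
    have "(\<integral>x. (\<Sum>i<d. \<Sum>j<d. ut i x * ut j x) \<partial>\<Omega>) = (\<Sum>i<d. \<integral>x. (\<Sum>j<d. ut i x * ut j x) \<partial>\<Omega>)"
      by (rule Bochner_Integration.integral_sum) (rule a)
    also have "\<dots> = (\<Sum>i<d. \<Sum>j<d. \<integral>x. ut i x * ut j x \<partial>\<Omega>)"
      by (rule sum.cong[OF refl]) (rule b)
    finally show ?thesis unfolding US2_eq .
  qed
  also have "\<dots> = (\<Sum>i<d. \<integral>x. (ut i x)\<^sup>2 \<partial>\<Omega>)"
  proof (rule sum.cong[OF refl])
    fix i assume "i \<in> {..<d}" hence i: "i < d" by simp
    have "(\<Sum>j<d. \<integral>x. ut i x * ut j x \<partial>\<Omega>) = (\<Sum>j\<in>{i}. \<integral>x. ut i x * ut j x \<partial>\<Omega>)"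
      by (rule sum.mono_neutral_right) (use i ut_cross[OF i] in auto)
    thus "(\<Sum>j<d. \<integral>x. ut i x * ut j x \<partial>\<Omega>) = (\<integral>x. (ut i x)\<^sup>2 \<partial>\<Omega>)" by (simp add: power2_eq_square)
  qed
  also have "\<dots> \<le> (\<Sum>i<d. Bp)" by (rule sum_mono) (simp add: ut2_le)
  finally show ?thesis by simp
qed

lemma F1_bound: assumes a: "a > 0"
  shows "\<bar>\<integral>x. US x * iq x \<partial>\<Omega>\<bar> \<le> (a * (real d * Bp) + (\<integral>x. (iq x)\<^sup>2 \<partial>\<Omega>) / a) / 2"
proof -
  have int: "integrable \<Omega> (\<lambda>x. US x * iq x)"
    by (rule Bochner_Integration.integrable_bound[of _ "\<lambda>x. ((US x)\<^sup>2 + (iq x)\<^sup>2) / 2"])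
       (auto simp: US2_int iq2_int intro!: AE_I2 amgm1 amgm1')
  have "\<bar>\<integral>x. US x * iq x \<partial>\<Omega>\<bar> \<le> (\<integral>x. (a * (US x)\<^sup>2 + (iq x)\<^sup>2 / a) / 2 \<partial>\<Omega>)"
    by (rule abs_int_le[OF int _ amgm[OF a]]) (auto simp: US2_int iq2_int)
  also have "\<dots> = (a * (\<integral>x. (US x)\<^sup>2 \<partial>\<Omega>) + (\<integral>x. (iq x)\<^sup>2 \<partial>\<Omega>) / a) / 2"
    using US2_int iq2_int by simp
  also have "\<dots> \<le> (a * (real d * Bp) + (\<integral>x. (iq x)\<^sup>2 \<partial>\<Omega>) / a) / 2"
    using US2_le a by (intro divide_right_mono add_right_mono mult_left_mono) auto
  finally show ?thesis .
qed

definition "W x = (\<Sum>i<d. ut i x * ((xx i x)\<^sup>2 * (iq x)\<^sup>2))"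

lemma xq2_le: "i < d \<Longrightarrow> ((xx i x)\<^sup>2 * (iq x)\<^sup>2)\<^sup>2 \<le> (iq x)\<^sup>2"
  using xx_iq[of i x] by (intro power_mono) auto

lemma sum_xq2_le: "(\<Sum>i<d. ((xx i x)\<^sup>2 * (iq x)\<^sup>2)\<^sup>2) \<le> (iq x)\<^sup>2"
proof -
  have "(\<Sum>i<d. ((xx i x)\<^sup>2 * (iq x)\<^sup>2)\<^sup>2) = (\<Sum>i<d. ((xx i x)\<^sup>2)\<^sup>2) * (iq x)\<^sup>2 * (iq x)\<^sup>2"
  proof -
    have "(\<Sum>i<d. ((xx i x)\<^sup>2 * (iq x)\<^sup>2)\<^sup>2) = (\<Sum>i<d. ((xx i x)\<^sup>2)\<^sup>2 * (iq x)\<^sup>2 * (iq x)\<^sup>2)"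
      by (rule sum.cong[OF refl]) (simp add: power_mult_distrib power2_eq_square)
    also have "\<dots> = (\<Sum>i<d. ((xx i x)\<^sup>2)\<^sup>2) * (iq x)\<^sup>2 * (iq x)\<^sup>2"
      by (simp add: sum_distrib_right)
    finally show ?thesis .
  qed
  also have "\<dots> \<le> (QQ x)\<^sup>2 * (iq x)\<^sup>2 * (iq x)\<^sup>2"
    unfolding QQ_def by (intro mult_right_mono sum_sq_le_sq_sum) auto
  also have "\<dots> = (iq x)\<^sup>2"
    by (cases "QQ x = 0") (auto simp: iq_def power2_eq_square)
  finally show ?thesis .
qed

lemma uxq_bound: "i < d \<Longrightarrow> \<bar>ut i x * ((xx i x)\<^sup>2 * (iq x)\<^sup>2)\<bar> * 2 \<le> (ut i x)\<^sup>2 + (iq x)\<^sup>2"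
  using amgm1'[of "ut i x" "(xx i x)\<^sup>2 * (iq x)\<^sup>2"] xq2_le[of i x] by linarith

lemma F2_bound: assumes a: "a > 0"
  shows "\<bar>\<integral>x. W x \<partial>\<Omega>\<bar> \<le> (a * (real d * Bp) + (\<integral>x. (iq x)\<^sup>2 \<partial>\<Omega>) / a) / 2"
proof -
  have tint: "integrable \<Omega> (\<lambda>x. ut i x * ((xx i x)\<^sup>2 * (iq x)\<^sup>2))" if i: "i < d" for i
    by (rule Bochner_Integration.integrable_bound[of _ "\<lambda>x. ((ut i x)\<^sup>2 + (iq x)\<^sup>2) / 2"])
       (use i in \<open>auto simp: ut2_int iq2_int intro!: AE_I2 uxq_bound\<close>)
  have Wint: "integrable \<Omega> W" unfolding W_def by (auto intro!: Bochner_Integration.integrable_sum tint)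
  have bint: "integrable \<Omega> (\<lambda>x. (a * (\<Sum>i<d. (ut i x)\<^sup>2) + (iq x)\<^sup>2 / a) / 2)"
  proof -
    have "integrable \<Omega> (\<lambda>x. \<Sum>i<d. (ut i x)\<^sup>2)"
      by (rule Bochner_Integration.integrable_sum) (simp add: ut2_int)
    thus ?thesis using iq2_int by simp
  qed
  have pt: "\<bar>W x\<bar> \<le> (a * (\<Sum>i<d. (ut i x)\<^sup>2) + (iq x)\<^sup>2 / a) / 2" for x
  proof -
    have "\<bar>W x\<bar> \<le> (\<Sum>i<d. \<bar>ut i x * ((xx i x)\<^sup>2 * (iq x)\<^sup>2)\<bar>)" unfolding W_def by (rule sum_abs)
    also have "\<dots> \<le> (\<Sum>i<d. (a * (ut i x)\<^sup>2 + ((xx i x)\<^sup>2 * (iq x)\<^sup>2)\<^sup>2 / a) / 2)"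
      by (rule sum_mono) (rule amgm[OF a])
    also have "\<dots> = (a * (\<Sum>i<d. (ut i x)\<^sup>2) + (\<Sum>i<d. ((xx i x)\<^sup>2 * (iq x)\<^sup>2)\<^sup>2) / a) / 2"
      using sum_lin[of "1/2" a "\<lambda>i. (ut i x)\<^sup>2" "\<lambda>i. ((xx i x)\<^sup>2 * (iq x)\<^sup>2)\<^sup>2" "{..<d}"] by simp
    also have "\<dots> \<le> (a * (\<Sum>i<d. (ut i x)\<^sup>2) + (iq x)\<^sup>2 / a) / 2"
      using sum_xq2_le a by (intro divide_right_mono add_left_mono) auto
    finally show ?thesis .
  qed
  have "\<bar>\<integral>x. W x \<partial>\<Omega>\<bar> \<le> (\<integral>x. (a * (\<Sum>i<d. (ut i x)\<^sup>2) + (iq x)\<^sup>2 / a) / 2 \<partial>\<Omega>)"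
    by (rule abs_int_le[OF Wint bint pt])
  also have "\<dots> = (a * (\<Sum>i<d. \<integral>x. (ut i x)\<^sup>2 \<partial>\<Omega>) + (\<integral>x. (iq x)\<^sup>2 \<partial>\<Omega>) / a) / 2"
  proof -
    have si: "integrable \<Omega> (\<lambda>x. \<Sum>i<d. (ut i x)\<^sup>2)"
      by (rule Bochner_Integration.integrable_sum) (simp add: ut2_int)
    have ss: "(\<integral>x. (\<Sum>i<d. (ut i x)\<^sup>2) \<partial>\<Omega>) = (\<Sum>i<d. \<integral>x. (ut i x)\<^sup>2 \<partial>\<Omega>)"
      by (rule Bochner_Integration.integral_sum) (simp add: ut2_int)
    show ?thesis using si iq2_int by (simp add: ss)
  qed
  also have "\<dots> \<le> (a * (real d * Bp) + (\<integral>x. (iq x)\<^sup>2 \<partial>\<Omega>) / a) / 2"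
  proof -
    have "(\<Sum>i<d. \<integral>x. (ut i x)\<^sup>2 \<partial>\<Omega>) \<le> (\<Sum>i<d. Bp)" by (rule sum_mono) (simp add: ut2_le)
    thus ?thesis using a by (intro divide_right_mono add_right_mono mult_left_mono) auto
  qed
  finally show ?thesis .
qed

end


context setting begin

interpretation M: prob_space M by (rule M_prob)
interpretation O: prob_space \<Omega> by (rule Omega_prob)

lemma sum_xx2_iq2: "(\<Sum>i<d. (xx i x)\<^sup>2 * (iq x)\<^sup>2) = iq x"
proof -
  have "(\<Sum>i<d. (xx i x)\<^sup>2 * (iq x)\<^sup>2) = QQ x * (iq x)\<^sup>2" unfolding QQ_def by (simp add: sum_distrib_right)
  also have "\<dots> = iq x" by (cases "QQ x = 0") (auto simp: iq_def power2_eq_square)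
  finally show ?thesis .
qed

lemma one_abs: "\<bar>(\<lambda>i x. 1::real) i x\<bar> \<le> 1" by simp
lemma one_meas: "(\<lambda>i x. 1::real) i \<in> borel_measurable \<Omega>" by simp

lemma yxq_int: "i < d \<Longrightarrow> integrable \<Omega> (\<lambda>x. yy i x * (xx i x * iq x))"
  using int_yxq[of "\<lambda>i x. 1", OF one_abs one_meas] by simp
lemma yxqz_int: "i < d \<Longrightarrow> integrable \<Omega> (\<lambda>x. yy i x * (xx i x * iq x) * zz i x)"
  using int_yxq[of zz, OF zz_abs zz_meas] by simp
lemma yxqp_int: "i < d \<Longrightarrow> integrable \<Omega> (\<lambda>x. yy i x * (xx i x * iq x) * pos i x)"
  using int_yxq[of pos, OF pos_abs pos_meas] by simp
lemma tD_int: "i < d \<Longrightarrow> integrable \<Omega> (\<lambda>x. tt i x * Dd i x)"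
  using int_tD[of "\<lambda>i x. 1", OF one_abs one_meas] by simp
lemma tDz_int: "i < d \<Longrightarrow> integrable \<Omega> (\<lambda>x. tt i x * Dd i x * zz i x)"
  using int_tD[of zz, OF zz_abs zz_meas] by simp
lemma tDp_int: "i < d \<Longrightarrow> integrable \<Omega> (\<lambda>x. tt i x * Dd i x * pos i x)"
  using int_tD[of pos, OF pos_abs pos_meas] by simp

lemma A_decomp: assumes i: "i < d"
  shows "(\<integral>x. yy i x * (xx i x * iq x) \<partial>\<Omega>) = (\<integral>x. tt i x * Dd i x \<partial>\<Omega>)
      - (\<integral>x. tt i x * Dd i x * zz i x \<partial>\<Omega>) + (\<integral>x. yy i x * (xx i x * iq x) * zz i x \<partial>\<Omega>)"
proof -
  have pz: "pos i x = 1 - zz i x" for x unfolding zz_def by simp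
  have "(\<integral>x. yy i x * (xx i x * iq x) \<partial>\<Omega>) =
      (\<integral>x. yy i x * (xx i x * iq x) * pos i x + yy i x * (xx i x * iq x) * zz i x \<partial>\<Omega>)"
    by (rule Bochner_Integration.integral_cong[OF refl]) (simp add: pz algebra_simps)
  also have "\<dots> = (\<integral>x. yy i x * (xx i x * iq x) * pos i x \<partial>\<Omega>) + (\<integral>x. yy i x * (xx i x * iq x) * zz i x \<partial>\<Omega>)"
    using yxqp_int[OF i] yxqz_int[OF i] by simp
  also have "(\<integral>x. yy i x * (xx i x * iq x) * pos i x \<partial>\<Omega>) = (\<integral>x. tt i x * Dd i x * pos i x \<partial>\<Omega>)"
    by (rule stein_Omega[OF i])
  also have "\<dots> = (\<integral>x. tt i x * Dd i x - tt i x * Dd i x * zz i x \<partial>\<Omega>)"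
    by (rule Bochner_Integration.integral_cong[OF refl]) (simp add: pz algebra_simps)
  also have "\<dots> = (\<integral>x. tt i x * Dd i x \<partial>\<Omega>) - (\<integral>x. tt i x * Dd i x * zz i x \<partial>\<Omega>)"
    using tD_int[OF i] tDz_int[OF i] by simp
  finally show ?thesis .
qed

lemma sum_tD_pt: "(\<Sum>i<d. tt i x * Dd i x) = \<sigma>\<^sup>2 * (real d - 2) * iq x + US x * iq x - 2 * W x"
proof -
  have "(\<Sum>i<d. tt i x * Dd i x) = (\<Sum>i<d. ut i x * iq x - 2 * (ut i x * ((xx i x)\<^sup>2 * (iq x)\<^sup>2))
        + \<sigma>\<^sup>2 * iq x - 2 * \<sigma>\<^sup>2 * ((xx i x)\<^sup>2 * (iq x)\<^sup>2))"
    by (rule sum.cong[OF refl]) (simp add: ut_def Dd_def algebra_simps)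
  also have "\<dots> = US x * iq x - 2 * W x + real d * \<sigma>\<^sup>2 * iq x - 2 * \<sigma>\<^sup>2 * (\<Sum>i<d. (xx i x)\<^sup>2 * (iq x)\<^sup>2)"
    by (simp add: US_def W_def sum.distrib sum_subtractf sum_distrib_left sum_distrib_right)
  also have "\<dots> = \<sigma>\<^sup>2 * (real d - 2) * iq x + US x * iq x - 2 * W x"
    unfolding sum_xx2_iq2 by (simp add: algebra_simps)
  finally show ?thesis .
qed

lemma US_iq_int: "integrable \<Omega> (\<lambda>x. US x * iq x)"
  by (rule Bochner_Integration.integrable_bound[of _ "\<lambda>x. ((US x)\<^sup>2 + (iq x)\<^sup>2) / 2"])
     (auto simp: US2_int iq2_int intro!: AE_I2 amgm1 amgm1')

lemma W_int: "integrable \<Omega> W"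
proof -
  have tint: "integrable \<Omega> (\<lambda>x. ut i x * ((xx i x)\<^sup>2 * (iq x)\<^sup>2))" if i: "i < d" for i
    by (rule Bochner_Integration.integrable_bound[of _ "\<lambda>x. ((ut i x)\<^sup>2 + (iq x)\<^sup>2) / 2"])
       (use i in \<open>auto simp: ut2_int iq2_int intro!: AE_I2 uxq_bound\<close>)
  show ?thesis unfolding W_def by (rule Bochner_Integration.integrable_sum) (simp add: tint)
qed

definition "SA = (\<Sum>i<d. \<integral>x. yy i x * (xx i x * iq x) \<partial>\<Omega>)"
definition "H1 = (\<Sum>i<d. \<integral>x. tt i x * Dd i x * zz i x \<partial>\<Omega>)"
definition "H2 = (\<Sum>i<d. \<integral>x. yy i x * (xx i x * iq x) * zz i x \<partial>\<Omega>)"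

lemma SA_decomp: "SA = \<sigma>\<^sup>2 * (real d - 2) * (\<integral>x. iq x \<partial>\<Omega>) + (\<integral>x. US x * iq x \<partial>\<Omega>) - 2 * (\<integral>x. W x \<partial>\<Omega>) - H1 + H2"
proof -
  have "SA = (\<Sum>i<d. \<integral>x. tt i x * Dd i x \<partial>\<Omega>) - H1 + H2"
    unfolding SA_def H1_def H2_def by (simp add: A_decomp sum.distrib sum_subtractf)
  also have "(\<Sum>i<d. \<integral>x. tt i x * Dd i x \<partial>\<Omega>) = (\<integral>x. (\<Sum>i<d. tt i x * Dd i x) \<partial>\<Omega>)"
    by (rule Bochner_Integration.integral_sum[symmetric]) (simp add: tD_int)
  also have "\<dots> = (\<integral>x. \<sigma>\<^sup>2 * (real d - 2) * iq x + US x * iq x - 2 * W x \<partial>\<Omega>)"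
    by (simp add: sum_tD_pt)
  also have "\<dots> = \<sigma>\<^sup>2 * (real d - 2) * (\<integral>x. iq x \<partial>\<Omega>) + (\<integral>x. US x * iq x \<partial>\<Omega>) - 2 * (\<integral>x. W x \<partial>\<Omega>)"
    using iq_int US_iq_int W_int by simp
  finally show ?thesis .
qed

definition "RF lam x = (\<Sum>i<d. (yy i x - lam * (xx i x * iq x))\<^sup>2)"

lemma RF_pt: "RF lam x = (\<Sum>i<d. (yy i x)\<^sup>2) - 2 * lam * (\<Sum>i<d. yy i x * (xx i x * iq x)) + lam\<^sup>2 * iq x"
proof -
  have "RF lam x = (\<Sum>i<d. (yy i x)\<^sup>2 - 2 * lam * (yy i x * (xx i x * iq x)) + lam\<^sup>2 * ((xx i x)\<^sup>2 * (iq x)\<^sup>2))"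
    unfolding RF_def by (rule sum.cong[OF refl]) (simp add: power2_eq_square algebra_simps)
  also have "\<dots> = (\<Sum>i<d. (yy i x)\<^sup>2) - 2 * lam * (\<Sum>i<d. yy i x * (xx i x * iq x)) + lam\<^sup>2 * (\<Sum>i<d. (xx i x)\<^sup>2 * (iq x)\<^sup>2)"
    by (simp add: sum.distrib sum_subtractf sum_distrib_left)
  finally show ?thesis by (simp add: sum_xx2_iq2)
qed

lemma RF_int: "integrable \<Omega> (RF lam)" and RF_eq: "(\<integral>x. RF lam x \<partial>\<Omega>) = real d * \<sigma>\<^sup>2 - 2 * lam * SA + lam\<^sup>2 * (\<integral>x. iq x \<partial>\<Omega>)"
proof -
  have s1: "integrable \<Omega> (\<lambda>x. \<Sum>i<d. (yy i x)\<^sup>2)"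
    by (rule Bochner_Integration.integrable_sum) (simp add: yy2_int)
  have s2: "integrable \<Omega> (\<lambda>x. \<Sum>i<d. yy i x * (xx i x * iq x))"
    by (rule Bochner_Integration.integrable_sum) (simp add: yxq_int)
  have e: "RF lam = (\<lambda>x. (\<Sum>i<d. (yy i x)\<^sup>2) - 2 * lam * (\<Sum>i<d. yy i x * (xx i x * iq x)) + lam\<^sup>2 * iq x)"
    by (simp add: fun_eq_iff RF_pt)
  show "integrable \<Omega> (RF lam)" unfolding e using s1 s2 iq_int by simp
  have i1: "(\<integral>x. (\<Sum>i<d. (yy i x)\<^sup>2) \<partial>\<Omega>) = real d * \<sigma>\<^sup>2"
    by (subst Bochner_Integration.integral_sum) (auto simp: yy2_int yy2_eq)
  have i2: "(\<integral>x. (\<Sum>i<d. yy i x * (xx i x * iq x)) \<partial>\<Omega>) = SA"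
    unfolding SA_def by (rule Bochner_Integration.integral_sum) (simp add: yxq_int)
  show "(\<integral>x. RF lam x \<partial>\<Omega>) = real d * \<sigma>\<^sup>2 - 2 * lam * SA + lam\<^sup>2 * (\<integral>x. iq x \<partial>\<Omega>)"
    unfolding e using s1 s2 iq_int i1 i2 by simp
qed

end


context setting begin

interpretation M: prob_space M by (rule M_prob)
interpretation O: prob_space \<Omega> by (rule Omega_prob)

definition "th2 = (\<Sum>i<d. (\<theta> i)\<^sup>2)"

lemma QQ_int: "integrable \<Omega> QQ" and QQ_eq: "(\<integral>x. QQ x \<partial>\<Omega>) = real d * \<sigma>\<^sup>2 + th2"
proof -
  have e: "QQ = (\<lambda>x. \<Sum>i<d. (yy i x)\<^sup>2 + 2 * \<theta> i * yy i x + (\<theta> i)\<^sup>2)"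
    by (auto simp: fun_eq_iff QQ_def xx_def yy_def power2_eq_square algebra_simps)
  show "integrable \<Omega> QQ" unfolding e
    by (rule Bochner_Integration.integrable_sum) (simp add: yy2_int yy_int)
  have "(\<integral>x. QQ x \<partial>\<Omega>) = (\<Sum>i<d. \<integral>x. (yy i x)\<^sup>2 + 2 * \<theta> i * yy i x + (\<theta> i)\<^sup>2 \<partial>\<Omega>)"
    unfolding e by (rule Bochner_Integration.integral_sum) (simp add: yy2_int yy_int)
  also have "\<dots> = (\<Sum>i<d. \<sigma>\<^sup>2 + (\<theta> i)\<^sup>2)"
    by (rule sum.cong[OF refl]) (simp add: yy2_int yy_int yy2_eq yy_mean O.prob_space)
  finally show "(\<integral>x. QQ x \<partial>\<Omega>) = real d * \<sigma>\<^sup>2 + th2" by (simp add: th2_def sum.distrib)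
qed

lemma th2_nonneg: "th2 \<ge> 0" unfolding th2_def by (simp add: sum_nonneg)

lemma iq_lower: assumes m: "(\<integral>x. QQ x \<partial>\<Omega>) > 0"
  shows "(\<integral>x. iq x \<partial>\<Omega>) \<ge> 1 / (\<integral>x. QQ x \<partial>\<Omega>)"
proof -
  define m where "m = (\<integral>x. QQ x \<partial>\<Omega>)"
  have mp: "m > 0" using m m_def by simp
  have pt: "AE x in \<Omega>. 2 \<le> QQ x / m + m * iq x"
    using QQ_pos_AE
  proof (rule AE_mp, intro AE_I2 impI)
    fix x assume Q: "QQ x > 0"
    have "0 \<le> (QQ x - m)\<^sup>2" by simp
    hence "2 * QQ x * m \<le> (QQ x)\<^sup>2 + m\<^sup>2" by (simp add: power2_eq_square algebra_simps)
    hence "2 * QQ x * m / (QQ x * m) \<le> ((QQ x)\<^sup>2 + m\<^sup>2) / (QQ x * m)"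
      using Q mp by (intro divide_right_mono) auto
    thus "2 \<le> QQ x / m + m * iq x"
      using Q mp by (simp add: iq_def field_simps power2_eq_square)
  qed
  have "2 \<le> (\<integral>x. QQ x / m + m * iq x \<partial>\<Omega>)"
  proof -
    have "(\<integral>x. 2 \<partial>\<Omega>) \<le> (\<integral>x. QQ x / m + m * iq x \<partial>\<Omega>)"
      by (rule integral_mono_AE) (use pt QQ_int iq_int in auto)
    thus ?thesis by (simp add: O.prob_space)
  qed
  also have "\<dots> = 1 + m * (\<integral>x. iq x \<partial>\<Omega>)"
    using QQ_int iq_int mp by (simp add: m_def[symmetric])
  finally have "1 \<le> m * (\<integral>x. iq x \<partial>\<Omega>)" by simp
  thus ?thesis using mp unfolding m_def[symmetric] by (simp add: field_simps)
qed

definition "Kc = 3 * (Bp + Cp) + \<sigma>\<^sup>2 + 1 + Cp"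

lemma Bp_nonneg: "Bp \<ge> 0" unfolding Bp_def by simp
lemma Cp_nonneg: "Cp \<ge> 0" unfolding Cp_def by simp

lemma err_bound:
  "\<bar>(\<integral>x. US x * iq x \<partial>\<Omega>) - 2 * (\<integral>x. W x \<partial>\<Omega>) - H1 + H2\<bar> \<le> Kc / sqrt (real d)"
proof -
  define s where "s = sqrt (real d)"
  have dpos: "real d > 0" using d_pos by simp
  have d1: "real d \<ge> 1" using d_pos by simp
  have sp: "s > 0" unfolding s_def using dpos by simp
  have ss: "s * s = real d" unfolding s_def using dpos by simp
  have sd: "s \<le> real d" using ss d1 sp by (metis mult_le_cancel_left2 order_le_less_trans less_eq_real_def
      not_less real_sqrt_ge_one s_def mult_cancel_right1 sqrt_le_D le_refl) 
  define I2 where "I2 = (\<integral>x. (iq x)\<^sup>2 \<partial>\<Omega>)"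
  define I1 where "I1 = (\<integral>x. iq x \<partial>\<Omega>)"
  have I2le: "I2 \<le> Cp / (real d)\<^sup>2" unfolding I2_def by (rule iq2_le)
  have I2nn: "I2 \<ge> 0" unfolding I2_def by simp
  have I1le: "I1 \<le> (1 + Cp) / (2 * real d)" unfolding I1_def by (rule iq_le)
  have I1nn: "I1 \<ge> 0" unfolding I1_def using iq_nonneg by simp
  have k1: "I2 * (real d * s) \<le> Cp / s"
  proof -
    have "I2 * (real d * s) \<le> Cp / (real d)\<^sup>2 * (real d * s)"
      using I2le sp dpos by (intro mult_right_mono) auto
    also have "\<dots> = Cp / s" using sp dpos ss by (simp add: field_simps power2_eq_square)
    finally show ?thesis .
  qed
  have k2: "I2 * s \<le> Cp / s"
  proof -
    have "I2 * s \<le> I2 * (real d * s)" using I2nn sp d1 by (intro mult_left_mono) auto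
    thus ?thesis using k1 by simp
  qed
  have k3: "I1 * s \<le> (1 + Cp) / (2 * s)"
  proof -
    have "I1 * s \<le> (1 + Cp) / (2 * real d) * s" using I1le sp by (intro mult_right_mono) auto
    also have "\<dots> = (1 + Cp) / (2 * s)" unfolding ss[symmetric] using sp by (simp add: field_simps)
    finally show ?thesis .
  qed
  have a1: "1 / (real d * s) > 0" using sp dpos by simp
  have f1: "\<bar>\<integral>x. US x * iq x \<partial>\<Omega>\<bar> \<le> (Bp + Cp) / (2 * s)"
  proof -
    have "\<bar>\<integral>x. US x * iq x \<partial>\<Omega>\<bar> \<le> (1 / (real d * s) * (real d * Bp) + I2 / (1 / (real d * s))) / 2"
      using F1_bound[OF a1] unfolding I2_def .
    also have "\<dots> = (Bp / s + I2 * (real d * s)) / 2" using sp dpos by simp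
    also have "\<dots> \<le> (Bp / s + Cp / s) / 2" by (intro divide_right_mono add_left_mono k1) simp
    finally show ?thesis by (simp add: add_divide_distrib)
  qed
  have f2: "\<bar>\<integral>x. W x \<partial>\<Omega>\<bar> \<le> (Bp + Cp) / (2 * s)"
  proof -
    have "\<bar>\<integral>x. W x \<partial>\<Omega>\<bar> \<le> (1 / (real d * s) * (real d * Bp) + I2 / (1 / (real d * s))) / 2"
      using F2_bound[OF a1] unfolding I2_def .
    also have "\<dots> = (Bp / s + I2 * (real d * s)) / 2" using sp dpos by simp
    also have "\<dots> \<le> (Bp / s + Cp / s) / 2" by (intro divide_right_mono add_left_mono k1) simp
    finally show ?thesis by (simp add: add_divide_distrib)
  qed
  have a2: "1 / s > 0" using sp by simp
  have h1: "\<bar>H1\<bar> \<le> 3 / 2 * ((Bp + Cp) / s)"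
  proof -
    have "\<bar>H1\<bar> \<le> 3 / 2 * (1 / s * Bp + I2 / (1 / s))"
      using H1_bound[OF a2] unfolding I2_def H1_def .
    also have "\<dots> = 3 / 2 * (Bp / s + I2 * s)" by simp
    also have "\<dots> \<le> 3 / 2 * (Bp / s + Cp / s)" by (intro mult_left_mono add_left_mono k2) simp
    finally show ?thesis by (simp add: add_divide_distrib)
  qed
  have h2: "\<bar>H2\<bar> \<le> (\<sigma>\<^sup>2 + (1 + Cp) / 2) / (2 * s)"
  proof -
    have "\<bar>H2\<bar> \<le> (1 / s * \<sigma>\<^sup>2 + I1 / (1 / s)) / 2"
      using H2_bound[OF a2] unfolding I1_def H2_def .
    also have "\<dots> = (\<sigma>\<^sup>2 / s + I1 * s) / 2" by simp
    also have "\<dots> \<le> (\<sigma>\<^sup>2 / s + (1 + Cp) / (2 * s)) / 2" by (intro divide_right_mono add_left_mono k3) simp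
    also have "\<dots> = (\<sigma>\<^sup>2 + (1 + Cp) / 2) / (2 * s)" using sp by (simp add: field_simps)
    finally show ?thesis .
  qed
  have "\<bar>(\<integral>x. US x * iq x \<partial>\<Omega>) - 2 * (\<integral>x. W x \<partial>\<Omega>) - H1 + H2\<bar>
      \<le> \<bar>\<integral>x. US x * iq x \<partial>\<Omega>\<bar> + 2 * \<bar>\<integral>x. W x \<partial>\<Omega>\<bar> + \<bar>H1\<bar> + \<bar>H2\<bar>" by linarith
  also have "\<dots> \<le> (Bp + Cp) / (2 * s) + 2 * ((Bp + Cp) / (2 * s)) + 3 / 2 * ((Bp + Cp) / s)
       + (\<sigma>\<^sup>2 + (1 + Cp) / 2) / (2 * s)" using f1 f2 h1 h2 by (intro add_mono mult_left_mono) auto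
  also have "\<dots> = (3 * (Bp + Cp) + \<sigma>\<^sup>2 / 2 + (1 + Cp) / 4) / s" using sp by (simp add: field_simps)
  also have "\<dots> \<le> Kc / s"
  proof (rule divide_right_mono)
    have "0 \<le> \<sigma>\<^sup>2" by simp
    have gen: "\<And>a b c :: real. 0 \<le> b \<Longrightarrow> 0 \<le> c \<Longrightarrow> a + b / 2 + (1 + c) / 4 \<le> a + b + 1 + c"
      by (simp add: field_simps)
    thus "3 * (Bp + Cp) + \<sigma>\<^sup>2 / 2 + (1 + Cp) / 4 \<le> Kc" unfolding Kc_def using Cp_nonneg \<open>0 \<le> \<sigma>\<^sup>2\<close> by blast
  qed (use sp in simp)
  finally show ?thesis unfolding s_def .
qed

lemma per_s_bound:
  assumes sig: "\<sigma> > 0" and lam: "lam = \<sigma>\<^sup>2 * (real d - 2)" and d3: "d \<ge> 3"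
  shows "(\<integral>x. RF lam x \<partial>\<Omega>) \<le> real d * \<sigma>\<^sup>2 - lam\<^sup>2 / (real d * \<sigma>\<^sup>2 + th2) + 2 * lam * (Kc / sqrt (real d))"
proof -
  define E where "E = (\<integral>x. US x * iq x \<partial>\<Omega>) - 2 * (\<integral>x. W x \<partial>\<Omega>) - H1 + H2"
  have lam0: "lam \<ge> 0" using lam d3 by simp
  have m: "real d * \<sigma>\<^sup>2 + th2 > 0" using sig d_pos th2_nonneg by (simp add: add_pos_nonneg)
  have "(\<integral>x. RF lam x \<partial>\<Omega>) = real d * \<sigma>\<^sup>2 - 2 * lam * SA + lam\<^sup>2 * (\<integral>x. iq x \<partial>\<Omega>)" by (rule RF_eq)
  also have "SA = lam * (\<integral>x. iq x \<partial>\<Omega>) + E" unfolding SA_decomp E_def lam by simp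
  finally have eq: "(\<integral>x. RF lam x \<partial>\<Omega>) = real d * \<sigma>\<^sup>2 - lam\<^sup>2 * (\<integral>x. iq x \<partial>\<Omega>) - 2 * lam * E"
    by (simp add: power2_eq_square algebra_simps)
  have low: "(\<integral>x. iq x \<partial>\<Omega>) \<ge> 1 / (real d * \<sigma>\<^sup>2 + th2)"
    using iq_lower[unfolded QQ_eq, OF m] .
  have "lam\<^sup>2 * (1 / (real d * \<sigma>\<^sup>2 + th2)) \<le> lam\<^sup>2 * (\<integral>x. iq x \<partial>\<Omega>)"
    using low by (intro mult_left_mono) auto
  moreover have "- (2 * lam * E) \<le> 2 * lam * (Kc / sqrt (real d))"
  proof -
    have "- (2 * lam * E) \<le> 2 * lam * \<bar>E\<bar>" using lam0 by (simp add: abs_if mult_le_0_iff)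
    also have "\<dots> \<le> 2 * lam * (Kc / sqrt (real d))"
      using err_bound lam0 unfolding E_def by (intro mult_left_mono) auto
    finally show ?thesis .
  qed
  ultimately show ?thesis unfolding eq by simp
qed

end


lemma mixture_nn_integral:
  fixes \<mu> :: "'s measure" and m :: "'s \<Rightarrow> 'a measure" and N :: "'a measure"
  assumes mu: "prob_space \<mu>" and mp: "\<And>s. s \<in> space \<mu> \<Longrightarrow> prob_space (m s)"
    and ms: "\<And>s. s \<in> space \<mu> \<Longrightarrow> sets (m s) = sets N"
    and mm: "\<And>A. A \<in> sets N \<Longrightarrow> (\<lambda>s. emeasure (m s) A) \<in> borel_measurable \<mu>"
    and f: "f \<in> borel_measurable N"
  shows "(\<integral>\<^sup>+ x. f x \<partial>mixture \<mu> m N) = (\<integral>\<^sup>+ s. (\<integral>\<^sup>+ x. f x \<partial>m s) \<partial>\<mu>)"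
proof -
  have K: "m \<in> measurable \<mu> (subprob_algebra N)"
    by (rule measurable_subprob_algebra) (auto simp: mp ms mm prob_space_imp_subprob_space)
  have ne: "space \<mu> \<noteq> {}" using mu prob_space.not_empty by blast
  have "mixture \<mu> m N = measure_of (space N) (sets N) (emeasure (\<mu> \<bind> m))"
    unfolding mixture_def
  proof (rule measure_of_eq)
    show "sets N \<subseteq> Pow (space N)" by (rule sets.space_closed)
    fix a assume "a \<in> sigma_sets (space N) (sets N)"
    hence a: "a \<in> sets N" by (simp add: sets.sigma_sets_eq)
    show "(\<integral>\<^sup>+ s. emeasure (m s) a \<partial>\<mu>) = emeasure (\<mu> \<bind> m) a"
      by (rule emeasure_bind[OF ne K a, symmetric])
  qed
  also have "\<dots> = \<mu> \<bind> m"
  proof -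
    have s1: "sets (\<mu> \<bind> m) = sets N" by (rule sets_bind[OF ms ne])
    have s2: "space (\<mu> \<bind> m) = space N" by (rule space_bind[OF ms ne])
    show ?thesis using measure_of_of_measure[of "\<mu> \<bind> m"] unfolding s1 s2 .
  qed
  finally have e: "mixture \<mu> m N = \<mu> \<bind> m" .
  show ?thesis unfolding e by (rule nn_integral_bind[OF f K])
qed

context setting begin

interpretation M: prob_space M by (rule M_prob)
interpretation O: prob_space \<Omega> by (rule Omega_prob)

lemma RF_nonneg: "RF lam x \<ge> 0" unfolding RF_def by (simp add: sum_nonneg)

lemma risk_shrink_M:
  "(\<integral>\<^sup>+ w. ennreal (sqnorm d (\<lambda>i. shrink d lam (translate d \<theta> (Y w)) i - \<theta> i)) \<partial>M)
     = ennreal (\<integral>x. RF lam x \<partial>\<Omega>)"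
proof -
  define F where "F v = ennreal (sqnorm d (\<lambda>i. shrink d lam (translate d \<theta> v) i - \<theta> i))" for v
  have Fe: "F = (\<lambda>v. ennreal (\<Sum>i<d. ((v i + \<theta> i) * (1 - lam / (\<Sum>j<d. (v j + \<theta> j)\<^sup>2)) - \<theta> i)\<^sup>2))"
    by (auto simp: fun_eq_iff F_def sqnorm_def shrink_def translate_def)
  have Fm: "F \<in> borel_measurable (vec_space d)" unfolding Fe vec_space_def by measurable
  have Fyv: "F (yv x) = ennreal (RF lam x)" for x
  proof -
    have "sqnorm d (\<lambda>i. shrink d lam (translate d \<theta> (yv x)) i - \<theta> i) = RF lam x"
      unfolding sqnorm_def RF_def
    proof (rule sum.cong[OF refl])
      fix i assume "i \<in> {..<d}"
      moreover have "sqnorm d (translate d \<theta> (yv x)) = QQ x" by (rule sqnorm_yv)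
      ultimately show "(shrink d lam (translate d \<theta> (yv x)) i - \<theta> i)\<^sup>2 = (yy i x - lam * (xx i x * iq x))\<^sup>2"
        by (simp add: shrink_def translate_def yv_def yy_def xx_def iq_def algebra_simps)
    qed
    thus ?thesis unfolding F_def by simp
  qed
  have "(\<integral>\<^sup>+ w. F (Y w) \<partial>M) = (\<integral>\<^sup>+ x. F (yv x) \<partial>\<Omega>)" by (rule transfer[OF Fm])
  also have "\<dots> = (\<integral>\<^sup>+ x. ennreal (RF lam x) \<partial>\<Omega>)" by (simp add: Fyv)
  also have "\<dots> = ennreal (\<integral>x. RF lam x \<partial>\<Omega>)"
    by (rule nn_integral_eq_integral) (auto simp: RF_int RF_nonneg)
  finally show ?thesis unfolding F_def .
qed

lemma risk_id_M:
  "(\<integral>\<^sup>+ w. ennreal (sqnorm d (\<lambda>i. translate d \<theta> (Y w) i - \<theta> i)) \<partial>M) = ennreal (real d * \<sigma>\<^sup>2)"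
proof -
  have e: "sqnorm d (\<lambda>i. translate d \<theta> (Y w) i - \<theta> i) = (\<Sum>i<d. (Y w i)\<^sup>2)" for w
    unfolding sqnorm_def translate_def by (rule sum.cong) auto
  have int: "integrable M (\<lambda>w. \<Sum>i<d. (Y w i)\<^sup>2)"
    by (rule Bochner_Integration.integrable_sum) (simp add: Y2_int)
  have "(\<integral>\<^sup>+ w. ennreal (\<Sum>i<d. (Y w i)\<^sup>2) \<partial>M) = ennreal (\<integral>w. (\<Sum>i<d. (Y w i)\<^sup>2) \<partial>M)"
    by (rule nn_integral_eq_integral[OF int]) (auto simp: sum_nonneg)
  also have "(\<integral>w. (\<Sum>i<d. (Y w i)\<^sup>2) \<partial>M) = real d * \<sigma>\<^sup>2"
    by (subst Bochner_Integration.integral_sum) (auto simp: Y2_int Y2_eq)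
  finally show ?thesis unfolding e .
qed

end


context setting begin

lemma final_s:
  assumes sig: "\<sigma> > 0" and lam: "lam = \<sigma>\<^sup>2 * (real d - 2)" and d3: "d \<ge> 3"
  shows "(\<integral>\<^sup>+ w. ennreal (sqnorm d (\<lambda>i. shrink d lam (translate d \<theta> (Y w)) i - \<theta> i)) \<partial>M)
     \<le> ennreal (real d * \<sigma>\<^sup>2 - lam\<^sup>2 / (real d * \<sigma>\<^sup>2 + sqnorm d \<theta>)
         + 2 * lam * ((3 * (max B 0 + max C 0) + \<sigma>\<^sup>2 + 1 + max C 0) / sqrt (real d)))"
proof -
  have "th2 = sqnorm d \<theta>" unfolding th2_def sqnorm_def ..
  moreover have "Kc = 3 * (max B 0 + max C 0) + \<sigma>\<^sup>2 + 1 + max C 0" unfolding Kc_def Bp_def Cp_def ..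
  ultimately show ?thesis
    unfolding risk_shrink_M using per_s_bound[OF sig lam d3] by (intro ennreal_leI) simp
qed

end

lemma obs_law_nn:
  fixes \<mu> :: "'s measure" and P :: "'s \<Rightarrow> 'w measure" and Y :: "'s \<Rightarrow> 'w \<Rightarrow> nat \<Rightarrow> real"
  assumes mu: "prob_space \<mu>" and Pp: "\<And>s. s \<in> space \<mu> \<Longrightarrow> prob_space (P s)"
    and Ym: "\<And>s. s \<in> space \<mu> \<Longrightarrow> Y s \<in> measurable (P s) (vec_space d)"
    and km: "\<And>A. A \<in> sets (vec_space d) \<Longrightarrow>
           (\<lambda>s. emeasure (distr (P s) (vec_space d) (Y s)) A) \<in> borel_measurable \<mu>"
    and g: "g \<in> borel_measurable (vec_space d)"
  shows "(\<integral>\<^sup>+ x. g x \<partial>obs_law d \<mu> P Y \<theta>) = (\<integral>\<^sup>+ s. (\<integral>\<^sup>+ w. g (translate d \<theta> (Y s w)) \<partial>P s) \<partial>\<mu>)"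
proof -
  have tm: "translate d \<theta> \<in> measurable (vec_space d) (vec_space d)"
    unfolding translate_def vec_space_def by measurable
  have gt: "(\<lambda>x. g (translate d \<theta> x)) \<in> borel_measurable (vec_space d)"
    using g tm by measurable
  have "(\<integral>\<^sup>+ x. g x \<partial>obs_law d \<mu> P Y \<theta>)
      = (\<integral>\<^sup>+ y. g (translate d \<theta> y) \<partial>mixture \<mu> (\<lambda>s. distr (P s) (vec_space d) (Y s)) (vec_space d))"
  proof -
    have ms: "sets (mixture \<mu> (\<lambda>s. distr (P s) (vec_space d) (Y s)) (vec_space d)) = sets (vec_space d)"
      unfolding mixture_def by (simp add: sets_measure_of[OF sets.space_closed] sets.sigma_sets_eq)
    have tm': "translate d \<theta> \<in> measurable (mixture \<mu> (\<lambda>s. distr (P s) (vec_space d) (Y s)) (vec_space d)) (vec_space d)"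
      using tm measurable_cong_sets[OF ms refl] by blast
    show ?thesis unfolding obs_law_def by (rule nn_integral_distr[OF tm']) (simp add: g)
  qed
  also have "\<dots> = (\<integral>\<^sup>+ s. (\<integral>\<^sup>+ y. g (translate d \<theta> y) \<partial>distr (P s) (vec_space d) (Y s)) \<partial>\<mu>)"
    by (rule mixture_nn_integral[OF mu _ _ km gt]) (auto intro: prob_space.prob_space_distr Pp Ym)
  also have "\<dots> = (\<integral>\<^sup>+ s. (\<integral>\<^sup>+ w. g (translate d \<theta> (Y s w)) \<partial>P s) \<partial>\<mu>)"
    by (rule nn_integral_cong) (simp add: nn_integral_distr Ym gt)
  finally show ?thesis .
qed


theorem mainTheorem5:
  fixes \<mu> :: "nat \<Rightarrow> 's measure"
    and P :: "nat \<Rightarrow> 's \<Rightarrow> 'w measure"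
    and Y :: "nat \<Rightarrow> 's \<Rightarrow> 'w \<Rightarrow> nat \<Rightarrow> real"
    and T :: "nat \<Rightarrow> 's \<Rightarrow> nat \<Rightarrow> 'w \<Rightarrow> real"
    and \<theta> :: "nat \<Rightarrow> nat \<Rightarrow> real"
    and \<sigma> B C :: real
  assumes mu_prob: "\<And>d. prob_space (\<mu> d)"
    and P_prob: "\<And>d s. s \<in> space (\<mu> d) \<Longrightarrow> prob_space (P d s)"
    and Y_meas: "\<And>d s. s \<in> space (\<mu> d) \<Longrightarrow> Y d s \<in> measurable (P d s) (vec_space d)"
    and kernel_meas: "\<And>d A. A \<in> sets (vec_space d) \<Longrightarrow>
           (\<lambda>s. emeasure (distr (P d s) (vec_space d) (Y d s)) A) \<in> borel_measurable (\<mu> d)"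
    and mean_zero: "\<And>d s i. s \<in> space (\<mu> d) \<Longrightarrow> i < d \<Longrightarrow>
           integrable (P d s) (\<lambda>w. Y d s w i) \<and> (\<integral>w. Y d s w i \<partial>P d s) = 0"
    and covariance: "\<And>d s i j. s \<in> space (\<mu> d) \<Longrightarrow> i < d \<Longrightarrow> j < d \<Longrightarrow>
           integrable (P d s) (\<lambda>w. Y d s w i * Y d s w j) \<and>
           (\<integral>w. Y d s w i * Y d s w j \<partial>P d s) = (if i = j then \<sigma>\<^sup>2 else 0)"
    and sigma_pos: "\<sigma> > 0"
    and indep: "\<And>d s. s \<in> space (\<mu> d) \<Longrightarrow>
           prob_space.indep_vars (P d s) (\<lambda>_. borel) (\<lambda>i w. Y d s w i) {..<d}"
    and stein: "\<And>d s i. s \<in> space (\<mu> d) \<Longrightarrow> i < d \<Longrightarrow>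
           stein_kernel (P d s) (\<lambda>w. Y d s w i) (T d s i)"
    and stein_bound: "\<And>d s i. s \<in> space (\<mu> d) \<Longrightarrow> i < d \<Longrightarrow>
           (\<integral>\<^sup>+ w. ennreal ((T d s i w)\<^sup>2) \<partial>P d s) \<le> ennreal B"
    and sobolev: "\<And>d. in_W12 d (obs_law d (\<mu> d) (P d) (Y d) (\<theta> d)) (g0 d)"
    and inv_moment: "\<And>d s. s \<in> space (\<mu> d) \<Longrightarrow>
           (\<integral>\<^sup>+ w. (ennreal (real d) / ennreal (sqnorm d (translate d (\<theta> d) (Y d s w))))\<^sup>2 \<partial>P d s)
             \<le> ennreal C"
    and theta_growth: "(\<lambda>d. sqnorm d (\<theta> d)) \<in> O(\<lambda>d. real d)"
  shows "\<forall>\<^sub>F d in sequentially.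
           risk d (obs_law d (\<mu> d) (P d) (Y d) (\<theta> d)) (\<theta> d) (shrink d (\<sigma>\<^sup>2 * (real d - 2)))
         < risk d (obs_law d (\<mu> d) (P d) (Y d) (\<theta> d)) (\<theta> d) (\<lambda>x. x)"
proof -
  from theta_growth obtain c where c: "c > 0"
    and ev1: "eventually (\<lambda>d. norm (sqnorm d (\<theta> d)) \<le> c * norm (real d)) at_top"
    by (rule landau_o.bigE)
  define K0 where "K0 = 3 * (max B 0 + max C 0) + \<sigma>\<^sup>2 + 1 + max C 0"
  define c0 where "c0 = \<sigma>\<^sup>2 / (2 * (\<sigma>\<^sup>2 + c))"
  have c0p: "c0 > 0" unfolding c0_def using sigma_pos c by (simp add: add_pos_pos)
  have K0p: "K0 \<ge> 0" unfolding K0_def by simp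
  define N where "N = nat \<lceil>(4 * K0 / c0)\<^sup>2\<rceil> + 4"
  have ev2: "eventually (\<lambda>d. d \<ge> N) at_top" by (rule eventually_ge_at_top)
  show ?thesis using ev1 ev2
  proof eventually_elim
    case (elim d)
    let ?lam = "\<sigma>\<^sup>2 * (real d - 2)"
    let ?nu = "obs_law d (\<mu> d) (P d) (Y d) (\<theta> d)"
    have d4: "d \<ge> 4" using elim(2) unfolding N_def by simp
    have dpos: "d > 0" using d4 by simp
    have th: "sqnorm d (\<theta> d) \<le> c * real d" using elim(1) by simp
    have thnn: "sqnorm d (\<theta> d) \<ge> 0" unfolding sqnorm_def by (simp add: sum_nonneg)
    have sig2: "\<sigma>\<^sup>2 > 0" using sigma_pos by simp
    define bnd where "bnd = real d * \<sigma>\<^sup>2 - ?lam\<^sup>2 / (real d * \<sigma>\<^sup>2 + sqnorm d (\<theta> d))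
         + 2 * ?lam * (K0 / sqrt (real d))"
    have bnd_le: "bnd \<le> real d * \<sigma>\<^sup>2 - \<sigma>\<^sup>2 * c0"
    proof -
      have lam2: "?lam \<ge> 2 * \<sigma>\<^sup>2" using d4 sig2 by (simp add: algebra_simps)
      have lampos: "?lam > 0" using lam2 sig2 by linarith
      have den: "real d * \<sigma>\<^sup>2 + sqnorm d (\<theta> d) > 0" using dpos sig2 thnn by (simp add: add_pos_nonneg)
      have q1: "?lam / (real d * \<sigma>\<^sup>2 + sqnorm d (\<theta> d)) \<ge> c0"
      proof -
        have "real d * \<sigma>\<^sup>2 + sqnorm d (\<theta> d) \<le> real d * (\<sigma>\<^sup>2 + c)" using th by (simp add: algebra_simps)
        hence "?lam / (real d * (\<sigma>\<^sup>2 + c)) \<le> ?lam / (real d * \<sigma>\<^sup>2 + sqnorm d (\<theta> d))"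
          using lampos den by (intro divide_left_mono) auto
        moreover have "c0 \<le> ?lam / (real d * (\<sigma>\<^sup>2 + c))"
        proof -
          have "real d \<le> 2 * (real d - 2)" using d4 by simp
          hence "\<sigma>\<^sup>2 * real d \<le> 2 * ?lam" using sig2 by (simp add: algebra_simps)
          note h = this
          have A: "\<sigma>\<^sup>2 + c > 0" using sig2 c by (rule add_pos_pos)
          have "c0 = (\<sigma>\<^sup>2 * real d) / (2 * (real d * (\<sigma>\<^sup>2 + c)))"
            unfolding c0_def using dpos by simp
          also have "\<dots> \<le> (2 * ?lam) / (2 * (real d * (\<sigma>\<^sup>2 + c)))"
            using h A dpos by (intro divide_right_mono) auto
          also have "\<dots> = ?lam / (real d * (\<sigma>\<^sup>2 + c))" by simp
          finally show ?thesis .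
        qed
        ultimately show ?thesis by linarith
      qed
      have q2: "2 * (K0 / sqrt (real d)) \<le> c0 / 2"
      proof -
        have "(4 * K0 / c0)\<^sup>2 \<le> real d"
        proof -
          have "(4 * K0 / c0)\<^sup>2 \<le> real (nat \<lceil>(4 * K0 / c0)\<^sup>2\<rceil>)" by linarith
          also have "\<dots> \<le> real d" using elim(2) unfolding N_def by simp
          finally show ?thesis .
        qed
        hence "sqrt ((4 * K0 / c0)\<^sup>2) \<le> sqrt (real d)" by (rule real_sqrt_le_mono)
        hence s: "4 * K0 / c0 \<le> sqrt (real d)" using K0p c0p by simp
        have sp: "sqrt (real d) > 0" using dpos by simp
        have "4 * K0 \<le> c0 * sqrt (real d)" using s c0p by (simp add: field_simps)
        thus ?thesis using sp c0p by (simp add: field_simps)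
      qed
      have "?lam\<^sup>2 / (real d * \<sigma>\<^sup>2 + sqnorm d (\<theta> d)) - 2 * ?lam * (K0 / sqrt (real d))
          = ?lam * (?lam / (real d * \<sigma>\<^sup>2 + sqnorm d (\<theta> d)) - 2 * (K0 / sqrt (real d)))"
        by (simp add: power2_eq_square algebra_simps)
      also have "\<dots> \<ge> ?lam * (c0 / 2)"
      proof -
        have gen: "\<And>a b e :: real. e \<le> a \<Longrightarrow> 2 * b \<le> e / 2 \<Longrightarrow> e / 2 \<le> a - 2 * b"
          by (simp add: field_simps)
        have "c0 / 2 \<le> ?lam / (real d * \<sigma>\<^sup>2 + sqnorm d (\<theta> d)) - 2 * (K0 / sqrt (real d))"
          by (rule gen[OF q1 q2])
        thus ?thesis using lampos by (intro mult_left_mono) auto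
      qed
      also have "?lam * (c0 / 2) \<ge> (2 * \<sigma>\<^sup>2) * (c0 / 2)"
        using lam2 c0p by (intro mult_right_mono) auto
      finally have "\<sigma>\<^sup>2 * c0 \<le> ?lam\<^sup>2 / (real d * \<sigma>\<^sup>2 + sqnorm d (\<theta> d)) - 2 * ?lam * (K0 / sqrt (real d))"
        by simp
      thus ?thesis unfolding bnd_def by simp
    qed
    have mu: "prob_space (\<mu> d)" by (rule mu_prob)
    have gS: "(\<lambda>x. ennreal (sqnorm d (\<lambda>i. shrink d ?lam x i - \<theta> d i))) \<in> borel_measurable (vec_space d)"
    proof -
      have "(\<lambda>x. ennreal (sqnorm d (\<lambda>i. shrink d ?lam x i - \<theta> d i)))
         = (\<lambda>x. ennreal (\<Sum>i<d. (x i * (1 - ?lam / (\<Sum>j<d. (x j)\<^sup>2)) - \<theta> d i)\<^sup>2))"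
        by (auto simp: fun_eq_iff sqnorm_def shrink_def)
      thus ?thesis unfolding vec_space_def by simp
    qed
    have gI: "(\<lambda>x. ennreal (sqnorm d (\<lambda>i. x i - \<theta> d i))) \<in> borel_measurable (vec_space d)"
      unfolding sqnorm_def vec_space_def by measurable
    have set: "setting (P d s) d (Y d s) (T d s) (\<theta> d) \<sigma> B C" if s: "s \<in> space (\<mu> d)" for s
    proof (rule setting.intro)
      show "ghost (P d s) {..<d}" unfolding ghost_def using P_prob[OF s] by simp
      show "setting_axioms (P d s) d (Y d s) (T d s) (\<theta> d) \<sigma> B C"
        unfolding setting_axioms_def
      proof (intro conjI allI impI)
        show "Y d s \<in> P d s \<rightarrow>\<^sub>M vec_space d" by (rule Y_meas[OF s])
        show "prob_space.indep_vars (P d s) (\<lambda>_. borel) (\<lambda>i w. Y d s w i) {..<d}" by (rule indep[OF s])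
        show "(\<integral>\<^sup>+ w. (ennreal (real d) / ennreal (sqnorm d (translate d (\<theta> d) (Y d s w))))\<^sup>2 \<partial>P d s) \<le> ennreal C"
          by (rule inv_moment[OF s])
        show "0 < d" by (rule dpos)
        fix i assume i: "i < d"
        show "integrable (P d s) (\<lambda>w. Y d s w i)" using mean_zero[OF s i] by blast
        show "(\<integral>w. Y d s w i \<partial>P d s) = 0" using mean_zero[OF s i] by blast
        show "stein_kernel (P d s) (\<lambda>w. Y d s w i) (T d s i)" by (rule stein[OF s i])
        show "(\<integral>\<^sup>+ w. ennreal ((T d s i w)\<^sup>2) \<partial>P d s) \<le> ennreal B" by (rule stein_bound[OF s i])
        fix j assume j: "j < d"
        show "integrable (P d s) (\<lambda>w. Y d s w i * Y d s w j)" using covariance[OF s i j] by blast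
        show "(\<integral>w. Y d s w i * Y d s w j \<partial>P d s) = (if i = j then \<sigma>\<^sup>2 else 0)"
          using covariance[OF s i j] by blast
      qed
    qed
    have RS: "risk d ?nu (\<theta> d) (shrink d ?lam)
        = (\<integral>\<^sup>+ s. (\<integral>\<^sup>+ w. ennreal (sqnorm d (\<lambda>i. shrink d ?lam (translate d (\<theta> d) (Y d s w)) i - \<theta> d i)) \<partial>P d s) \<partial>\<mu> d)"
      unfolding risk_def by (rule obs_law_nn[OF mu P_prob Y_meas kernel_meas gS])
    have RI: "risk d ?nu (\<theta> d) (\<lambda>x. x)
        = (\<integral>\<^sup>+ s. (\<integral>\<^sup>+ w. ennreal (sqnorm d (\<lambda>i. translate d (\<theta> d) (Y d s w) i - \<theta> d i)) \<partial>P d s) \<partial>\<mu> d)"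
      unfolding risk_def by (rule obs_law_nn[OF mu P_prob Y_meas kernel_meas gI])
    have "risk d ?nu (\<theta> d) (shrink d ?lam) \<le> (\<integral>\<^sup>+ s. ennreal (real d * \<sigma>\<^sup>2 - \<sigma>\<^sup>2 * c0) \<partial>\<mu> d)"
      unfolding RS
    proof (rule nn_integral_mono)
      fix s assume s: "s \<in> space (\<mu> d)"
      have "(\<integral>\<^sup>+ w. ennreal (sqnorm d (\<lambda>i. shrink d ?lam (translate d (\<theta> d) (Y d s w)) i - \<theta> d i)) \<partial>P d s)
          \<le> ennreal bnd"
        unfolding bnd_def K0_def
        by (rule setting.final_s[OF set[OF s] sigma_pos refl]) (use d4 in simp)
      also have "\<dots> \<le> ennreal (real d * \<sigma>\<^sup>2 - \<sigma>\<^sup>2 * c0)" by (rule ennreal_leI[OF bnd_le])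
      finally show "(\<integral>\<^sup>+ w. ennreal (sqnorm d (\<lambda>i. shrink d ?lam (translate d (\<theta> d) (Y d s w)) i - \<theta> d i)) \<partial>P d s)
          \<le> ennreal (real d * \<sigma>\<^sup>2 - \<sigma>\<^sup>2 * c0)" .
    qed
    also have "\<dots> = ennreal (real d * \<sigma>\<^sup>2 - \<sigma>\<^sup>2 * c0)"
      using prob_space.emeasure_space_1[OF mu] by simp
    also have "\<dots> < ennreal (real d * \<sigma>\<^sup>2)"
      using c0p sig2 dpos by (intro ennreal_lessI) auto
    also have "\<dots> = (\<integral>\<^sup>+ s. ennreal (real d * \<sigma>\<^sup>2) \<partial>\<mu> d)"
      using prob_space.emeasure_space_1[OF mu] by simp
    also have "\<dots> = risk d ?nu (\<theta> d) (\<lambda>x. x)"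
      unfolding RI
    proof (rule nn_integral_cong)
      fix s assume s: "s \<in> space (\<mu> d)"
      show "ennreal (real d * \<sigma>\<^sup>2) = (\<integral>\<^sup>+ w. ennreal (sqnorm d (\<lambda>i. translate d (\<theta> d) (Y d s w) i - \<theta> d i)) \<partial>P d s)"
        by (rule setting.risk_id_M[OF set[OF s], symmetric])
    qed
    finally show ?case .
  qed
qed

end
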